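(* Let $f\in\mathcal{S}(\Omega)$. (1) $\{y^c: y\in V(N(f^c))\}\supseteq V(f)$. (2) If $f'_s(x)\in C_A$ for every $x\in\Omega\setminus\mathbb{R}$, then for every $x\in\Omega$ the sets $\mathbb{S}_x\cap V(f)$ and $\mathbb{S}_x\cap V(f^c)$ are both empty, both singletons, or both equal to $\mathbb{S}_x$. Moreover, \[V(N(f))\supseteq\bigcup_{x\in V(f)}\mathbb{S}_x=\bigcup_{x\in V(f^c)}\mathbb{S}_x\subseteq V(N(f^c)).\] If, additionally, $A$ is nonsingular, then \[\bigcup_{x\in V(f)}\mathbb{S}_x=\bigcup_{x\in V(f^c)}\mathbb{S}_x=\bigcup_{\mathbb{S}_x\subseteq V(N(f))\cap V(N(f^c))}\mathbb{S}_x,\] whence $\bigcup_{x\in V(f)}\mathbb{S}_x=\bigcup_{x\in V(f^c)}\mathbb{S}_x=V(N(f))=V(N(f^c))$ if $f$ is also tame. (3) Suppose that $f^\circ_s(x)\in C_A$ for every $x\in\Omega$ and $f'_s(x)\in C_A$ for every $x\in\Omega\setminus\mathbb{R}$. Then \[\bigcup_{\mathbb{S}_x\subseteq V(N(f))}\mathbb{S}_x=\bigcup_{x\in V(f)}\mathbb{S}_x=\bigcup_{x\in V(f^c)}\mathbb{S}_x=\bigcup_{\mathbb{S}_x\subseteq V(N(f^c))}\mathbb{S}_x,\] whence $V(N(f))=\bigcup_{x\in V(f)}\mathbb{S}_x=\bigcup_{x\in V(f^c)}\mathbb{S}_x=V(N(f^c))$ if $f$ is also tame, and $V(N(f))=V(f)=V(f^c)=V(N(f^c))$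 if $f$ is slice preserving.
   Context: Let $A$ be a finite-dimensional real algebra with unit $1$ ($\mathbb{R}$ identified with $\mathbb{R}1$) which is alternative (the associator $(x,y,z)=(xy)z-x(yz)$ is alternating), with a $^*$-involution $x\mapsto x^c$ (real linear, $(x^c)^c=x$, $(xy)^c=y^cx^c$, $r^c=r$ for $r\in\mathbb{R}$). Let $t(x)=x+x^c$, $n(x)=xx^c$; $A$ is nonsingular if $n(x)=0$ implies $x=0$. The center of $A$ is the set of $r$ with $(r,a,b)=0$ and $ra=ar$ for all $a,b$; $C_A=\{0\}\cup\{a\in A: n(a),n(a^c)$ invertible elements of the center$\}$. Let $\mathbb{S}_A=\{J\in A:t(J)=0,n(J)=1\}$ (assumed non-empty), $Q_A=\mathbb{R}\cup\{x\in A:t(x),n(x)\in\mathbb{R},\ 4n(x)>t(x)^2\}$; every $x\in Q_A$ is $\alpha+\beta J$ with $\alpha,\beta\in\mathbb{R}$, $J\in\mathbb{S}_A$, $x^c=\alpha-\beta J$, $\mathrm{im}(x)=x-t(x)/2$, and $\mathbb{S}_x=\{\alpha+\beta I:I\in\mathbb{S}_A\}$. Let $D\subseteq\mathbb{C}$ be non-empty and invariant under complex conjugation and $\Omega=\{\alpha+\beta J:\alpha+i\beta\in D,\ J\in\mathbb{S}_A\}$. Let $A_{\mathbb{C}}=\{a+\imath b:a,b\in A\}$ with product $(a+\imath b)(a'+\imath b')=aa'-bb'+\imath(ab'+ba')$, conjugation $\overline{a+\imath b}=a-\imath b$, involution $(a+\imath b)^c=a^c+\imath b^c$. A stem function is $F=F_1+\imath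 F_2:D\to A_{\mathbb{C}}$ with $F(\bar z)=\overline{F(z)}$; it induces the slice function $f=\mathcal{I}(F)$, $f(\alpha+\beta J)=F_1(\alpha+i\beta)+JF_2(\alpha+i\beta)$. Slice product $f\cdot g=\mathcal{I}(FG)$, conjugate $f^c=\mathcal{I}(F^c)$, $F^c(z)=F(z)^c$, normal function $N(f)=f\cdot f^c$. $f$ is slice preserving if $F_1,F_2$ are real valued; tame if $N(f)$ is slice preserving and $N(f)=N(f^c)$. $V(h)=\{x:h(x)=0\}$. $f^\circ_s(x)=\frac12(f(x)+f(x^c))$, $f'_s(x)=\frac12\mathrm{im}(x)^{-1}(f(x)-f(x^c))$ for $x\in\Omega\setminus\mathbb{R}$. Unions of the form $\bigcup_{\mathbb{S}_x\subseteq E}\mathbb{S}_x$ range over $x\in\Omega$. *)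

theory Defs
  imports "HOL-Analysis.Analysis"
begin

text \<open>A finite-dimensional real unital alternative algebra with *-involution is modelled
on a type 'a of class euclidean_space (a finite-dimensional real vector space) together with
an explicit multiplication mul, unit e and involution cj.  A real number r is identified
with r *R e.\<close>

definition assoc :: "('a::real_vector \<Rightarrow> 'a \<Rightarrow> 'a) \<Rightarrow> 'a \<Rightarrow> 'a \<Rightarrow> 'a \<Rightarrow> 'a" where
  "assoc mul x y z = mul (mul x y) z - mul x (mul y z)"

definition alt_star_alg :: "('a::euclidean_space \<Rightarrow> 'a \<Rightarrow> 'a) \<Rightarrow> 'a \<Rightarrow> ('a \<Rightarrow> 'a) \<Rightarrow> bool" where
  "alt_star_alg mul e cj \<longleftrightarrow>
     bilinear mul \<and> e \<noteq> 0 \<and> (\<forall>x. mul e x = x \<and> mul x e = x) \<and>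
     (\<forall>x y. assoc mul x x y = 0 \<and> assoc mul x y x = 0 \<and> assoc mul y x x = 0) \<and>
     linear cj \<and> (\<forall>x. cj (cj x) = x) \<and> (\<forall>x y. cj (mul x y) = mul (cj y) (cj x)) \<and>
     (\<forall>r. cj (r *\<^sub>R e) = r *\<^sub>R e)"

definition realA :: "'a::real_vector \<Rightarrow> 'a set" where
  "realA e = range (\<lambda>r. r *\<^sub>R e)"

definition trA :: "('a::real_vector \<Rightarrow> 'a) \<Rightarrow> 'a \<Rightarrow> 'a" where
  "trA cj x = x + cj x"

definition nA :: "('a::real_vector \<Rightarrow> 'a \<Rightarrow> 'a) \<Rightarrow> ('a \<Rightarrow> 'a) \<Rightarrow> 'a \<Rightarrow> 'a" where
  "nA mul cj x = mul x (cj x)"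

definition nonsingular :: "('a::real_vector \<Rightarrow> 'a \<Rightarrow> 'a) \<Rightarrow> ('a \<Rightarrow> 'a) \<Rightarrow> bool" where
  "nonsingular mul cj \<longleftrightarrow> (\<forall>x. nA mul cj x = 0 \<longrightarrow> x = 0)"

definition centerA :: "('a::real_vector \<Rightarrow> 'a \<Rightarrow> 'a) \<Rightarrow> 'a set" where
  "centerA mul = {r. \<forall>a b. assoc mul r a b = 0 \<and> mul r a = mul a r}"

definition invertibleA :: "('a::real_vector \<Rightarrow> 'a \<Rightarrow> 'a) \<Rightarrow> 'a \<Rightarrow> 'a \<Rightarrow> bool" where
  "invertibleA mul e a \<longleftrightarrow> (\<exists>b. mul a b = e \<and> mul b a = e)"

definition invA :: "('a::real_vector \<Rightarrow> 'a \<Rightarrow> 'a) \<Rightarrow> 'a \<Rightarrow> 'a \<Rightarrow> 'a" where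
  "invA mul e a = (THE b. mul a b = e \<and> mul b a = e)"

definition CA :: "('a::real_vector \<Rightarrow> 'a \<Rightarrow> 'a) \<Rightarrow> 'a \<Rightarrow> ('a \<Rightarrow> 'a) \<Rightarrow> 'a set" where
  "CA mul e cj = {0} \<union> {a. nA mul cj a \<in> centerA mul \<and> invertibleA mul e (nA mul cj a) \<and>
                         nA mul cj (cj a) \<in> centerA mul \<and> invertibleA mul e (nA mul cj (cj a))}"

definition SA :: "('a::real_vector \<Rightarrow> 'a \<Rightarrow> 'a) \<Rightarrow> 'a \<Rightarrow> ('a \<Rightarrow> 'a) \<Rightarrow> 'a set" where
  "SA mul e cj = {J. trA cj J = 0 \<and> nA mul cj J = e}"

definition OmegaD :: "('a::real_vector \<Rightarrow> 'a \<Rightarrow> 'a) \<Rightarrow> 'a \<Rightarrow> ('a \<Rightarrow> 'a) \<Rightarrow> complex set \<Rightarrow> 'a set" where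
  "OmegaD mul e cj D = {\<alpha> *\<^sub>R e + \<beta> *\<^sub>R J | \<alpha> \<beta> J. Complex \<alpha> \<beta> \<in> D \<and> J \<in> SA mul e cj}"

definition Sx :: "('a::real_vector \<Rightarrow> 'a \<Rightarrow> 'a) \<Rightarrow> 'a \<Rightarrow> ('a \<Rightarrow> 'a) \<Rightarrow> 'a \<Rightarrow> 'a set" where
  "Sx mul e cj x = {y. \<exists>\<alpha> \<beta> J I. J \<in> SA mul e cj \<and> I \<in> SA mul e cj \<and>
                        x = \<alpha> *\<^sub>R e + \<beta> *\<^sub>R J \<and> y = \<alpha> *\<^sub>R e + \<beta> *\<^sub>R I}"

definition imA :: "('a::real_vector \<Rightarrow> 'a) \<Rightarrow> 'a \<Rightarrow> 'a" where
  "imA cj x = x - (1/2) *\<^sub>R trA cj x"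

text \<open>Stem functions F = F1 + i F2 : D \<rightarrow> A_C, represented by the pair (F1, F2).\<close>
definition is_stem :: "complex set \<Rightarrow> (complex \<Rightarrow> 'a::real_vector) \<Rightarrow> (complex \<Rightarrow> 'a) \<Rightarrow> bool" where
  "is_stem D F1 F2 \<longleftrightarrow> (\<forall>z\<in>D. F1 (cnj z) = F1 z \<and> F2 (cnj z) = - F2 z)"

definition sliceI :: "('a::real_vector \<Rightarrow> 'a \<Rightarrow> 'a) \<Rightarrow> 'a \<Rightarrow> ('a \<Rightarrow> 'a) \<Rightarrow> complex set \<Rightarrow>
    (complex \<Rightarrow> 'a) \<Rightarrow> (complex \<Rightarrow> 'a) \<Rightarrow> 'a \<Rightarrow> 'a" where
  "sliceI mul e cj D F1 F2 x = (SOME v. \<exists>\<alpha> \<beta> J. J \<in> SA mul e cj \<and> Complex \<alpha> \<beta> \<in> D \<and>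
        x = \<alpha> *\<^sub>R e + \<beta> *\<^sub>R J \<and> v = F1 (Complex \<alpha> \<beta>) + mul J (F2 (Complex \<alpha> \<beta>)))"

text \<open>Product in A_C: (F1 + i F2)(G1 + i G2) = F1 G1 - F2 G2 + i (F1 G2 + F2 G1), pointwise.\<close>
definition stem_mul1 :: "('a::real_vector \<Rightarrow> 'a \<Rightarrow> 'a) \<Rightarrow> (complex \<Rightarrow> 'a) \<Rightarrow> (complex \<Rightarrow> 'a) \<Rightarrow>
    (complex \<Rightarrow> 'a) \<Rightarrow> (complex \<Rightarrow> 'a) \<Rightarrow> complex \<Rightarrow> 'a" where
  "stem_mul1 mul F1 F2 G1 G2 z = mul (F1 z) (G1 z) - mul (F2 z) (G2 z)"

definition stem_mul2 :: "('a::real_vector \<Rightarrow> 'a \<Rightarrow> 'a) \<Rightarrow> (complex \<Rightarrow> 'a) \<Rightarrow> (complex \<Rightarrow> 'a) \<Rightarrow>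
    (complex \<Rightarrow> 'a) \<Rightarrow> (complex \<Rightarrow> 'a) \<Rightarrow> complex \<Rightarrow> 'a" where
  "stem_mul2 mul F1 F2 G1 G2 z = mul (F1 z) (G2 z) + mul (F2 z) (G1 z)"

definition slice_prod :: "('a::real_vector \<Rightarrow> 'a \<Rightarrow> 'a) \<Rightarrow> 'a \<Rightarrow> ('a \<Rightarrow> 'a) \<Rightarrow> complex set \<Rightarrow>
    (complex \<Rightarrow> 'a) \<Rightarrow> (complex \<Rightarrow> 'a) \<Rightarrow> (complex \<Rightarrow> 'a) \<Rightarrow> (complex \<Rightarrow> 'a) \<Rightarrow> 'a \<Rightarrow> 'a" where
  "slice_prod mul e cj D F1 F2 G1 G2 =
     sliceI mul e cj D (stem_mul1 mul F1 F2 G1 G2) (stem_mul2 mul F1 F2 G1 G2)"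

definition slice_conj :: "('a::real_vector \<Rightarrow> 'a \<Rightarrow> 'a) \<Rightarrow> 'a \<Rightarrow> ('a \<Rightarrow> 'a) \<Rightarrow> complex set \<Rightarrow>
    (complex \<Rightarrow> 'a) \<Rightarrow> (complex \<Rightarrow> 'a) \<Rightarrow> 'a \<Rightarrow> 'a" where
  "slice_conj mul e cj D F1 F2 = sliceI mul e cj D (cj \<circ> F1) (cj \<circ> F2)"

definition normal_fun :: "('a::real_vector \<Rightarrow> 'a \<Rightarrow> 'a) \<Rightarrow> 'a \<Rightarrow> ('a \<Rightarrow> 'a) \<Rightarrow> complex set \<Rightarrow>
    (complex \<Rightarrow> 'a) \<Rightarrow> (complex \<Rightarrow> 'a) \<Rightarrow> 'a \<Rightarrow> 'a" where
  "normal_fun mul e cj D F1 F2 = slice_prod mul e cj D F1 F2 (cj \<circ> F1) (cj \<circ> F2)"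

text \<open>I(F) is slice preserving iff F1, F2 are real valued (on D).\<close>
definition slice_preserving :: "'a::real_vector \<Rightarrow> complex set \<Rightarrow> (complex \<Rightarrow> 'a) \<Rightarrow> (complex \<Rightarrow> 'a) \<Rightarrow> bool" where
  "slice_preserving e D F1 F2 \<longleftrightarrow> (\<forall>z\<in>D. F1 z \<in> realA e \<and> F2 z \<in> realA e)"

text \<open>I(F) is tame iff N(f) is slice preserving and N(f) = N(f^c) (as functions on Omega).\<close>
definition tame :: "('a::real_vector \<Rightarrow> 'a \<Rightarrow> 'a) \<Rightarrow> 'a \<Rightarrow> ('a \<Rightarrow> 'a) \<Rightarrow> complex set \<Rightarrow>
    (complex \<Rightarrow> 'a) \<Rightarrow> (complex \<Rightarrow> 'a) \<Rightarrow> bool" where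
  "tame mul e cj D F1 F2 \<longleftrightarrow>
     slice_preserving e D (stem_mul1 mul F1 F2 (cj \<circ> F1) (cj \<circ> F2))
                          (stem_mul2 mul F1 F2 (cj \<circ> F1) (cj \<circ> F2)) \<and>
     (\<forall>x\<in>OmegaD mul e cj D. normal_fun mul e cj D F1 F2 x
                             = normal_fun mul e cj D (cj \<circ> F1) (cj \<circ> F2) x)"

definition Vz :: "'a set \<Rightarrow> ('a \<Rightarrow> 'a::zero) \<Rightarrow> 'a set" where
  "Vz \<Omega> h = {x\<in>\<Omega>. h x = 0}"

definition fs0 :: "('a::real_vector \<Rightarrow> 'a) \<Rightarrow> ('a \<Rightarrow> 'a) \<Rightarrow> 'a \<Rightarrow> 'a" where
  "fs0 cj f x = (1/2) *\<^sub>R (f x + f (cj x))"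

definition fs' :: "('a::real_vector \<Rightarrow> 'a \<Rightarrow> 'a) \<Rightarrow> 'a \<Rightarrow> ('a \<Rightarrow> 'a) \<Rightarrow> ('a \<Rightarrow> 'a) \<Rightarrow> 'a \<Rightarrow> 'a" where
  "fs' mul e cj f x = (1/2) *\<^sub>R mul (invA mul e (imA cj x)) (f x - f (cj x))"

definition USx :: "('a::real_vector \<Rightarrow> 'a \<Rightarrow> 'a) \<Rightarrow> 'a \<Rightarrow> ('a \<Rightarrow> 'a) \<Rightarrow> 'a set \<Rightarrow> 'a set" where
  "USx mul e cj E = (\<Union>x\<in>E. Sx mul e cj x)"

definition USx_in :: "('a::real_vector \<Rightarrow> 'a \<Rightarrow> 'a) \<Rightarrow> 'a \<Rightarrow> ('a \<Rightarrow> 'a) \<Rightarrow> complex set \<Rightarrow> 'a set \<Rightarrow> 'a set" where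
  "USx_in mul e cj D E = \<Union>{Sx mul e cj x | x. x \<in> OmegaD mul e cj D \<and> Sx mul e cj x \<subseteq> E}"

end

theory Submission
  imports Defs
begin



locale altalg =
  fixes mul :: "'a::euclidean_space \<Rightarrow> 'a \<Rightarrow> 'a" (infixl "\<odot>" 70)
    and e :: 'a and cj :: "'a \<Rightarrow> 'a"
  assumes alg: "alt_star_alg mul e cj"
begin

lemma bil: "bilinear mul" using alg by (simp add: alt_star_alg_def)
lemma e_nz: "e \<noteq> 0" using alg by (simp add: alt_star_alg_def)
lemma e_l[simp]: "e \<odot> x = x" using alg by (simp add: alt_star_alg_def)
lemma e_r[simp]: "x \<odot> e = x" using alg by (simp add: alt_star_alg_def)
lemma lin_cj: "linear cj" using alg by (simp add: alt_star_alg_def)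
lemma cj_cj[simp]: "cj (cj x) = x" using alg by (simp add: alt_star_alg_def)
lemma cj_mul: "cj (x \<odot> y) = cj y \<odot> cj x" using alg by (simp add: alt_star_alg_def)
lemma cj_re[simp]: "cj (r *\<^sub>R e) = r *\<^sub>R e" using alg by (simp add: alt_star_alg_def)

lemma ml_add[simp]: "(x + y) \<odot> z = x \<odot> z + y \<odot> z" by (rule bilinear_ladd[OF bil])
lemma mr_add[simp]: "z \<odot> (x + y) = z \<odot> x + z \<odot> y" by (rule bilinear_radd[OF bil])
lemma ml_sub[simp]: "(x - y) \<odot> z = x \<odot> z - y \<odot> z" by (rule bilinear_lsub[OF bil])
lemma mr_sub[simp]: "z \<odot> (x - y) = z \<odot> x - z \<odot> y" by (rule bilinear_rsub[OF bil])
lemma ml_neg[simp]: "(- x) \<odot> z = - (x \<odot> z)" by (rule bilinear_lneg[OF bil])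
lemma mr_neg[simp]: "z \<odot> (- x) = - (z \<odot> x)" by (rule bilinear_rneg[OF bil])
lemma ml_0[simp]: "0 \<odot> z = 0" by (rule bilinear_lzero[OF bil])
lemma mr_0[simp]: "z \<odot> 0 = 0" by (rule bilinear_rzero[OF bil])
lemma ml_sc[simp]: "(r *\<^sub>R x) \<odot> z = r *\<^sub>R (x \<odot> z)" by (rule bilinear_lmul[OF bil])
lemma mr_sc[simp]: "z \<odot> (r *\<^sub>R x) = r *\<^sub>R (z \<odot> x)" by (rule bilinear_rmul[OF bil])

lemma cj_add[simp]: "cj (x + y) = cj x + cj y" using lin_cj by (simp add: linear_add)
lemma cj_sub[simp]: "cj (x - y) = cj x - cj y" using lin_cj by (simp add: linear_diff)
lemma cj_neg[simp]: "cj (- x) = - cj x" using lin_cj by (simp add: linear_neg)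
lemma cj_sc[simp]: "cj (r *\<^sub>R x) = r *\<^sub>R cj x" using lin_cj by (simp add: linear_scale)
lemma cj_0[simp]: "cj 0 = 0" using lin_cj by (simp add: linear_0)
lemma cj_e[simp]: "cj e = e" using cj_re[of 1] by simp

abbreviation as where "as x y z \<equiv> assoc mul x y z"

lemma as_def: "as x y z = (x \<odot> y) \<odot> z - x \<odot> (y \<odot> z)" by (simp add: assoc_def)

lemma alt1: "as x x y = 0" and alt2: "as x y x = 0" and alt3: "as y x x = 0"
  using alg by (auto simp: alt_star_alg_def)

lemma as_add1: "as (x + x') y z = as x y z + as x' y z" by (simp add: as_def algebra_simps)
lemma as_add2: "as x (y + y') z = as x y z + as x y' z" by (simp add: as_def algebra_simps)
lemma as_add3: "as x y (z + z') = as x y z + as x y z'" by (simp add: as_def algebra_simps)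
lemma as_neg1: "as (- x) y z = - as x y z" by (simp add: as_def algebra_simps)
lemma as_neg2: "as x (- y) z = - as x y z" by (simp add: as_def algebra_simps)
lemma as_neg3: "as x y (- z) = - as x y z" by (simp add: as_def algebra_simps)
lemma as_sc1: "as (r *\<^sub>R x) y z = r *\<^sub>R as x y z" by (simp add: as_def algebra_simps)
lemma as_sc2: "as x (r *\<^sub>R y) z = r *\<^sub>R as x y z" by (simp add: as_def algebra_simps)
lemma as_sc3: "as x y (r *\<^sub>R z) = r *\<^sub>R as x y z" by (simp add: as_def algebra_simps)
lemma as_e1[simp]: "as e y z = 0" by (simp add: as_def)
lemma as_e2[simp]: "as x e z = 0" by (simp add: as_def)
lemma as_e3[simp]: "as x y e = 0" by (simp add: as_def)

lemma sk12: "as x y z = - as y x z"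
proof -
  have "as (x+y) (x+y) z = as x x z + as y x z + (as x y z + as y y z)" by (simp only: as_add1 as_add2)
  hence "as x y z + as y x z = 0" by (simp add: alt1 algebra_simps)
  thus ?thesis by (simp add: eq_neg_iff_add_eq_0)
qed
lemma sk23: "as x y z = - as x z y"
proof -
  have "as x (y+z) (y+z) = as x y y + as x z y + (as x y z + as x z z)" by (simp only: as_add3 as_add2)
  hence "as x y z + as x z y = 0" by (simp add: alt3 algebra_simps)
  thus ?thesis by (simp add: eq_neg_iff_add_eq_0)
qed
lemma sk13: "as x y z = - as z y x"
  by (metis sk12 sk23 minus_minus)
lemma cyc: "as x y z = as y z x"
  by (metis sk12 sk23 minus_minus)

lemma teich: "as (a \<odot> b) c d - as a (b \<odot> c) d + as a b (c \<odot> d) = a \<odot> as b c d + as a b c \<odot> d"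
  by (simp add: as_def algebra_simps)

end


context altalg begin

lemma P_id: "as (x \<odot> x) y z = x \<odot> as x y z + as x y z \<odot> x"
proof -
  define P where "P = as (x \<odot> x) y z"
  define A where "A = as x y z"
  define U1 where "U1 = as x (x \<odot> y) z"
  define U2 where "U2 = as x (x \<odot> z) y"
  define V where "V = as x (y \<odot> x) z"
  have E1: "P - U1 = x \<odot> A" using teich[of x x y z] by (simp add: alt1 P_def U1_def A_def)
  have E2: "- P - U2 = - (x \<odot> A)" using teich[of x x z y]
    by (simp add: alt1 P_def U2_def A_def sk23[of "x\<odot>x" z y] sk23[of x z y])
  have E4: "V - P = - (A \<odot> x)" using teich[of z y x x]
    by (simp add: alt3 P_def V_def A_def sk13[of z "y\<odot>x" x] sk13[of z y "x\<odot>x"] cyc[of "x\<odot>x" y z]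
          sk13[of z y x])
  have E5: "- U1 - V - U2 = - (x \<odot> A)" using teich[of x y x z]
    by (simp add: alt2 U1_def U2_def V_def A_def sk12[of "x\<odot>y" x z] sk23[of x y "x\<odot>z"] sk12[of y x z])
  have "U1 = P - x \<odot> A" using E1 by (simp add: algebra_simps)
  moreover have "U2 = x \<odot> A - P" using E2 by (simp add: algebra_simps)
  moreover have "V = P - A \<odot> x" using E4 by (simp add: algebra_simps)
  ultimately have "- (P - x \<odot> A) - (P - A \<odot> x) - (x \<odot> A - P) = - (x \<odot> A)" using E5 by simp
  hence "P = x \<odot> A + A \<odot> x" by (simp add: algebra_simps)
  thus ?thesis by (simp add: P_def A_def)
qed

end


context altalg begin

lemma R1: "as x y (x \<odot> z) = as x y z \<odot> x"
proof -
  have E2: "- as (x \<odot> x) y z - as x (x \<odot> z) y = - (x \<odot> as x y z)" using teich[of x x z y]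
    by (simp add: alt1 sk23[of "x\<odot>x" z y] sk23[of x z y])
  have "as x y (x \<odot> z) = - as x (x \<odot> z) y" by (rule sk23)
  also have "\<dots> = as (x \<odot> x) y z - x \<odot> as x y z" using E2 by (simp add: algebra_simps)
  finally show ?thesis using P_id[of x y z] by simp
qed

lemma R2: "as x y (z \<odot> x) = x \<odot> as x y z"
proof -
  have E3: "- as y (z \<odot> x) x + as y z (x \<odot> x) = as y z x \<odot> x" using teich[of y z x x]
    by (simp add: alt3)
  have a: "as y (z \<odot> x) x = as x y (z \<odot> x)" using sk13[of y "z\<odot>x" x] sk23[of x "z\<odot>x" y] by simp
  have b: "as y z (x \<odot> x) = as (x \<odot> x) y z" using cyc[of y z "x\<odot>x"] cyc[of z "x\<odot>x" y] by simp
  have c: "as y z x = as x y z" using cyc[of x y z] by simp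
  from E3 a b c have "as x y (z \<odot> x) = as (x \<odot> x) y z - as x y z \<odot> x" by (simp add: algebra_simps)
  thus ?thesis using P_id[of x y z] by simp
qed

lemma V4: "as x (y \<odot> x) z = x \<odot> as x y z"
proof -
  have E4: "as x (y \<odot> x) z - as (x \<odot> x) y z = - (as x y z \<odot> x)" using teich[of z y x x]
    by (simp add: alt3 sk13[of z "y\<odot>x" x] sk13[of z y "x\<odot>x"] cyc[of "x\<odot>x" y z] sk13[of z y x])
  thus ?thesis using P_id[of x y z] by (simp add: algebra_simps)
qed

lemma U1: "as x (x \<odot> y) z = as x y z \<odot> x"
proof -
  have E1: "as (x \<odot> x) y z - as x (x \<odot> y) z = x \<odot> as x y z" using teich[of x x y z] by (simp add: alt1)
  thus ?thesis using P_id[of x y z] by (simp add: algebra_simps)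
qed

lemma Kf: "as (y \<odot> x) x z = x \<odot> as y x z"
proof -
  have T: "as (y \<odot> x) x z - as y (x \<odot> x) z + as y x (x \<odot> z) = 0" using teich[of y x x z]
    by (simp add: alt1 alt3)
  have a: "as y (x \<odot> x) z = - as (x \<odot> x) y z" by (rule sk12)
  have b: "as y x (x \<odot> z) = - (as x y z \<odot> x)" using sk12[of y x "x\<odot>z"] R1[of x y z] by simp
  from T a b have "as (y \<odot> x) x z = - as (x \<odot> x) y z + as x y z \<odot> x" by (simp add: algebra_simps)
  also have "\<dots> = - (x \<odot> as x y z)" using P_id[of x y z] by simp
  also have "\<dots> = x \<odot> as y x z" using sk12[of y x z] by simp
  finally show ?thesis .
qed

lemma flex: "(x \<odot> y) \<odot> x = x \<odot> (y \<odot> x)" using alt2[of x y] by (simp add: as_def)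
lemma altl: "(x \<odot> x) \<odot> y = x \<odot> (x \<odot> y)" using alt1[of x y] by (simp add: as_def)
lemma altr: "(y \<odot> x) \<odot> x = y \<odot> (x \<odot> x)" using alt3[of y x] by (simp add: as_def)

lemma midM: "(x \<odot> y) \<odot> (z \<odot> x) = x \<odot> ((y \<odot> z) \<odot> x)"
proof -
  have "(x \<odot> y) \<odot> (z \<odot> x) = as x y (z \<odot> x) + x \<odot> (y \<odot> (z \<odot> x))" by (simp add: as_def)
  also have "\<dots> = x \<odot> as x y z + x \<odot> (y \<odot> (z \<odot> x))" by (simp add: R2)
  also have "\<dots> = x \<odot> (as y z x + y \<odot> (z \<odot> x))" using cyc[of x y z] by simp
  also have "\<dots> = x \<odot> ((y \<odot> z) \<odot> x)" by (simp add: as_def)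
  finally show ?thesis .
qed

lemma leftM: "((x \<odot> y) \<odot> x) \<odot> z = x \<odot> (y \<odot> (x \<odot> z))"
proof -
  have "((x \<odot> y) \<odot> x) \<odot> z = (x \<odot> (y \<odot> x)) \<odot> z" by (simp add: flex)
  also have "\<dots> = as x (y \<odot> x) z + x \<odot> ((y \<odot> x) \<odot> z)" by (simp add: as_def)
  also have "\<dots> = x \<odot> as x y z + x \<odot> ((y \<odot> x) \<odot> z)" by (simp add: V4)
  also have "\<dots> = x \<odot> (as x y z + (as y x z + y \<odot> (x \<odot> z)))" by (simp add: as_def)
  also have "\<dots> = x \<odot> (y \<odot> (x \<odot> z))" using sk12[of y x z] by simp
  finally show ?thesis .
qed

definition inv2 where "inv2 c d \<longleftrightarrow> c \<odot> d = e \<and> d \<odot> c = e"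

lemma inv2_sym: "inv2 c d \<Longrightarrow> inv2 d c" by (auto simp: inv2_def)

lemma lcancel: assumes "inv2 c d" "c \<odot> v = 0" shows "v = 0"
proof -
  have cd: "c \<odot> d = e" and dc: "d \<odot> c = e" using assms(1) by (auto simp: inv2_def)
  have "(d \<odot> c) \<odot> (v \<odot> d) = d \<odot> ((c \<odot> v) \<odot> d)" by (rule midM)
  hence vd: "v \<odot> d = 0" using dc assms(2) by simp
  have "as v d c = - v" using vd dc by (simp add: as_def)
  moreover have "as d c v = v" using dc assms(2) by (simp add: as_def)
  moreover have "as d c v = as v d c" using cyc[of v d c] by simp
  ultimately have "v = - v" by simp
  hence "2 *\<^sub>R v = 0" by (simp add: scaleR_2 eq_neg_iff_add_eq_0)
  thus ?thesis by simp
qed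

lemma rcancel: assumes "inv2 c d" "v \<odot> c = 0" shows "v = 0"
proof -
  have cd: "c \<odot> d = e" and dc: "d \<odot> c = e" using assms(1) by (auto simp: inv2_def)
  have "(d \<odot> v) \<odot> (c \<odot> d) = d \<odot> ((v \<odot> c) \<odot> d)" by (rule midM)
  hence dv: "d \<odot> v = 0" using cd assms(2) by simp
  have "as c d v = v" using dv cd by (simp add: as_def)
  moreover have "as d v c = 0" using dv assms(2) by (simp add: as_def)
  moreover have "as c d v = as d v c" using cyc[of c d v] by simp
  ultimately show ?thesis by simp
qed

lemma inv_prop: assumes "inv2 c d" shows "as d c z = 0"
proof -
  have cd: "c \<odot> d = e" and dc: "d \<odot> c = e" using assms(1) by (auto simp: inv2_def)
  have "((c \<odot> d) \<odot> c) \<odot> z = c \<odot> (d \<odot> (c \<odot> z))" by (rule leftM)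
  hence "c \<odot> (d \<odot> (c \<odot> z) - z) = 0" using cd by simp
  hence "d \<odot> (c \<odot> z) - z = 0" by (rule lcancel[OF assms])
  hence "d \<odot> (c \<odot> z) = z" by simp
  thus ?thesis using dc by (simp add: as_def)
qed

lemma inv_prop_all: assumes "inv2 c d"
  shows "as d c z = 0" "as c d z = 0" "as z c d = 0" "as z d c = 0" "as c z d = 0" "as d z c = 0"
proof -
  have a: "\<And>c d z. inv2 c d \<Longrightarrow> as d c z = 0" by (rule inv_prop)
  have b: "\<And>c d z. inv2 c d \<Longrightarrow> as z c d = 0"
  proof -
    fix c d z assume "inv2 c d" thus "as z c d = 0" using a[of c d z] sk13[of z c d] by simp
  qed
  have c: "\<And>c d z. inv2 c d \<Longrightarrow> as c z d = 0"
  proof -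
    fix c d z assume "inv2 c d" thus "as c z d = 0" using b[of c d z] sk12[of c z d] sk23[of z c d] by simp
  qed
  show "as d c z = 0" "as c d z = 0" "as z c d = 0" "as z d c = 0" "as c z d = 0" "as d z c = 0"
    using a[OF assms] a[OF inv2_sym[OF assms]] b[OF assms] b[OF inv2_sym[OF assms]]
      c[OF assms] c[OF inv2_sym[OF assms]] by auto
qed

end


context altalg begin

lemma cen_as1: "m \<in> centerA mul \<Longrightarrow> as m x y = 0" by (simp add: centerA_def)
lemma cen_comm: "m \<in> centerA mul \<Longrightarrow> m \<odot> x = x \<odot> m" by (simp add: centerA_def)
lemma cen_as2: "m \<in> centerA mul \<Longrightarrow> as x m y = 0" using cen_as1[of m x y] sk12[of x m y] by simp
lemma cen_as3: "m \<in> centerA mul \<Longrightarrow> as x y m = 0" using cen_as1[of m y x] sk13[of x y m] sk23[of m y x]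
  by simp

lemma cen_p1: "m \<in> centerA mul \<Longrightarrow> (m \<odot> x) \<odot> y = m \<odot> (x \<odot> y)"
  using cen_as1[of m x y] by (simp add: as_def)
lemma cen_p2: "m \<in> centerA mul \<Longrightarrow> x \<odot> (m \<odot> y) = m \<odot> (x \<odot> y)"
proof -
  assume m: "m \<in> centerA mul"
  have "x \<odot> (m \<odot> y) = (x \<odot> m) \<odot> y" using cen_as2[OF m, of x y] by (simp add: as_def)
  also have "\<dots> = (m \<odot> x) \<odot> y" using cen_comm[OF m] by simp
  finally show ?thesis using cen_p1[OF m] by simp
qed

lemma cen_asm1: assumes m: "m \<in> centerA mul" shows "as (m \<odot> x) y z = m \<odot> as x y z"
proof -
  have "(m \<odot> x \<odot> y) \<odot> z = m \<odot> ((x \<odot> y) \<odot> z)" using cen_p1[OF m, of x y] cen_p1[OF m, of "x \<odot> y" z] by simp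
  moreover have "(m \<odot> x) \<odot> (y \<odot> z) = m \<odot> (x \<odot> (y \<odot> z))" using cen_p1[OF m, of x "y \<odot> z"] by simp
  ultimately show ?thesis by (simp add: as_def)
qed
lemma cen_asm2: assumes m: "m \<in> centerA mul" shows "as x (m \<odot> y) z = m \<odot> as x y z"
proof -
  have "(x \<odot> (m \<odot> y)) \<odot> z = m \<odot> ((x \<odot> y) \<odot> z)" using cen_p2[OF m, of x y] cen_p1[OF m, of "x \<odot> y" z] by simp
  moreover have "x \<odot> ((m \<odot> y) \<odot> z) = m \<odot> (x \<odot> (y \<odot> z))" using cen_p1[OF m, of y z] cen_p2[OF m, of x "y \<odot> z"] by simp
  ultimately show ?thesis by (simp add: as_def)
qed
lemma cen_asm3: assumes m: "m \<in> centerA mul" shows "as x y (m \<odot> z) = m \<odot> as x y z"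
proof -
  have "(x \<odot> y) \<odot> (m \<odot> z) = m \<odot> ((x \<odot> y) \<odot> z)" using cen_p2[OF m, of "x \<odot> y" z] by simp
  moreover have "x \<odot> (y \<odot> (m \<odot> z)) = m \<odot> (x \<odot> (y \<odot> z))" using cen_p2[OF m, of y z] cen_p2[OF m, of x "y \<odot> z"] by simp
  ultimately show ?thesis by (simp add: as_def)
qed

lemma cen_inv: assumes m: "m \<in> centerA mul" and i: "inv2 m n" shows "n \<in> centerA mul"
proof -
  have mn: "m \<odot> n = e" and nm: "n \<odot> m = e" using i by (auto simp: inv2_def)
  have comm: "n \<odot> x = x \<odot> n" for x
  proof -
    have "m \<odot> (n \<odot> x) = x" using cen_p1[OF m, of n x] mn by simp
    moreover have "m \<odot> (x \<odot> n) = x"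
    proof -
      have "m \<odot> (x \<odot> n) = (m \<odot> x) \<odot> n" using cen_p1[OF m, of x n] by simp
      also have "\<dots> = (x \<odot> m) \<odot> n" using cen_comm[OF m, of x] by simp
      also have "\<dots> = x \<odot> (m \<odot> n)" using cen_as2[OF m, of x n] by (simp add: as_def)
      finally show ?thesis using mn by simp
    qed
    ultimately have "m \<odot> (n \<odot> x - x \<odot> n) = 0" by simp
    hence "n \<odot> x - x \<odot> n = 0" by (rule lcancel[OF i])
    thus ?thesis by simp
  qed
  have asz: "as n x y = 0" for x y
  proof -
    have "m \<odot> as n x y = 0" using cen_asm1[OF m, of n x y] cen_p1[OF m] mn
      by (simp add: as_def)
    thus ?thesis using lcancel[OF i] by simp
  qed
  show ?thesis using comm asz by (simp add: centerA_def)
qed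

end


context altalg begin
lemma SA_cj: "J \<in> SA mul e cj \<Longrightarrow> cj J = - J"
proof -
  assume "J \<in> SA mul e cj"
  hence "J + cj J = 0" by (simp add: SA_def trA_def)
  thus ?thesis by (metis add.commute add_eq_0_iff)
qed
lemma SA_sq: "J \<in> SA mul e cj \<Longrightarrow> J \<odot> J = - e"
proof -
  assume J: "J \<in> SA mul e cj"
  hence "J \<odot> cj J = e" by (simp add: SA_def nA_def)
  hence "- (J \<odot> J) = e" using SA_cj[OF J] by simp
  thus ?thesis by (metis minus_minus)
qed
lemma SA_I: "cj J = - J \<Longrightarrow> J \<odot> J = - e \<Longrightarrow> J \<in> SA mul e cj"
  unfolding SA_def nA_def trA_def by simp
lemma SA_neg: "J \<in> SA mul e cj \<Longrightarrow> - J \<in> SA mul e cj"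
  apply (rule SA_I) using SA_cj[of J] SA_sq[of J] by simp_all
lemma SA_inv: "J \<in> SA mul e cj \<Longrightarrow> inv2 J (- J)"
  using SA_sq[of J] unfolding inv2_def by simp

lemma CA_cj: "b \<in> CA mul e cj \<Longrightarrow> cj b \<in> CA mul e cj"
  by (auto simp: CA_def)

lemma cen_sc: "m \<in> centerA mul \<Longrightarrow> r *\<^sub>R m \<in> centerA mul"
  by (simp add: centerA_def as_sc1)

lemma inv_scale: assumes "invertibleA mul e x" "r \<noteq> 0" shows "invertibleA mul e (r *\<^sub>R x)"
proof -
  obtain y where y: "x \<odot> y = e" "y \<odot> x = e" using assms(1) by (auto simp: invertibleA_def)
  have "(r *\<^sub>R x) \<odot> ((1/r) *\<^sub>R y) = e" using y assms(2) by simp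
  moreover have "((1/r) *\<^sub>R y) \<odot> (r *\<^sub>R x) = e" using y assms(2) by simp
  ultimately show ?thesis unfolding invertibleA_def by blast
qed

lemma CA_0: "0 \<in> CA mul e cj" unfolding CA_def by blast

lemma CA_sc: assumes "b \<in> CA mul e cj" shows "r *\<^sub>R b \<in> CA mul e cj"
proof (cases "r = 0 \<or> b = 0")
  case True thus ?thesis using CA_0 by auto
next
  case False
  hence r: "r * r \<noteq> 0" and b: "b \<noteq> 0" by auto
  have b': "nA mul cj b \<in> centerA mul" "invertibleA mul e (nA mul cj b)"
           "nA mul cj (cj b) \<in> centerA mul" "invertibleA mul e (nA mul cj (cj b))"
    using assms b unfolding CA_def by auto
  have n1: "nA mul cj (r *\<^sub>R b) = (r * r) *\<^sub>R nA mul cj b" unfolding nA_def by simp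
  have n2: "nA mul cj (cj (r *\<^sub>R b)) = (r * r) *\<^sub>R nA mul cj (cj b)" unfolding nA_def by simp
  have "nA mul cj (r *\<^sub>R b) \<in> centerA mul" "invertibleA mul e (nA mul cj (r *\<^sub>R b))"
       "nA mul cj (cj (r *\<^sub>R b)) \<in> centerA mul" "invertibleA mul e (nA mul cj (cj (r *\<^sub>R b)))"
    unfolding n1 n2 using b'(1) b'(3) cen_sc inv_scale[OF b'(2) r] inv_scale[OF b'(4) r] by auto
  thus ?thesis unfolding CA_def by blast
qed

lemma CA_struct:
  assumes b: "b \<in> CA mul e cj" "b \<noteq> 0"
  obtains N Ni where "N \<in> centerA mul" "Ni \<in> centerA mul" "inv2 N Ni" "b \<odot> cj b = N" "cj b \<odot> b = N"
    "cj N = N" "cj Ni = Ni" "inv2 b (Ni \<odot> cj b)" "cj b = N \<odot> (Ni \<odot> cj b)"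
proof -
  define N where "N = b \<odot> cj b"
  define M where "M = cj b \<odot> b"
  have Nc: "N \<in> centerA mul" and Mc: "M \<in> centerA mul" and Ninv: "invertibleA mul e N"
    and Minv: "invertibleA mul e M"
    using b by (auto simp: CA_def nA_def N_def M_def)
  obtain Ni where Ni: "inv2 N Ni" using Ninv by (auto simp: invertibleA_def inv2_def)
  obtain Mi where Mi: "inv2 M Mi" using Minv by (auto simp: invertibleA_def inv2_def)
  have Nic: "Ni \<in> centerA mul" by (rule cen_inv[OF Nc Ni])
  have Mic: "Mi \<in> centerA mul" by (rule cen_inv[OF Mc Mi])
  have NNi: "N \<odot> Ni = e" "Ni \<odot> N = e" using Ni by (auto simp: inv2_def)
  have MMi: "M \<odot> Mi = e" "Mi \<odot> M = e" using Mi by (auto simp: inv2_def)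
  define L where "L = Mi \<odot> cj b"
  define R where "R = Ni \<odot> cj b"
  have Lb: "L \<odot> b = e" using cen_p1[OF Mic] MMi by (simp add: L_def M_def)
  have bR: "b \<odot> R = e" using cen_p2[OF Nic] NNi by (simp add: R_def N_def)
  have "as L b R = Ni \<odot> (Mi \<odot> as (cj b) b (cj b))"
    by (simp add: L_def R_def cen_asm1[OF Mic] cen_asm3[OF Nic])
  hence asz: "as L b R = 0" by (simp add: alt2)
  have LR: "L = R"
  proof -
    have "L = L \<odot> (b \<odot> R)" using bR by simp
    also have "\<dots> = (L \<odot> b) \<odot> R - as L b R" by (simp add: as_def)
    finally show ?thesis using Lb asz by simp
  qed
  have "R \<odot> b = Ni \<odot> M" using cen_p1[OF Nic] by (simp add: R_def M_def)
  hence NiM: "Ni \<odot> M = e" using LR Lb by simp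
  have MN: "M = N"
  proof -
    have "N \<odot> (Ni \<odot> M) = (N \<odot> Ni) \<odot> M" using cen_p1[OF Nc] by simp
    thus ?thesis using NiM NNi by simp
  qed
  have cN: "cj N = N" by (simp add: N_def cj_mul)
  have cNi: "cj Ni = Ni"
  proof -
    have "cj (N \<odot> Ni) = e" using NNi by simp
    hence h: "cj Ni \<odot> N = e" using cN by (simp add: cj_mul)
    have "cj Ni = (cj Ni \<odot> N) \<odot> Ni" using cen_as2[OF Nc, of "cj Ni" Ni] NNi by (simp add: as_def)
    thus ?thesis using h by simp
  qed
  have inb: "inv2 b (Ni \<odot> cj b)" using bR LR Lb by (simp add: inv2_def R_def L_def)
  have "N \<odot> (Ni \<odot> cj b) = cj b" using cen_p1[OF Nc, of Ni "cj b"] NNi by simp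
  thus ?thesis using that[OF Nc Nic Ni] inb cN cNi MN by (simp add: N_def M_def)
qed

end


context altalg begin

lemma K0:
  assumes b: "b \<in> CA mul e cj" and I: "I \<in> SA mul e cj" and z: "a + I \<odot> b = 0"
  shows "a \<odot> cj a - b \<odot> cj b = 0 \<and> a \<odot> cj b + b \<odot> cj a = 0"
proof (cases "b = 0")
  case True thus ?thesis using z by simp
next
  case False
  obtain N Ni where Nc: "N \<in> centerA mul" and Nic: "Ni \<in> centerA mul" and NNi: "inv2 N Ni"
    and bN: "b \<odot> cj b = N" and cbN: "cj b \<odot> b = N" and ib: "inv2 b (Ni \<odot> cj b)"
    and cbd: "cj b = N \<odot> (Ni \<odot> cj b)"
    using CA_struct[OF b False] by metis
  define d where "d = Ni \<odot> cj b"
  have ib': "inv2 b d" and cbd': "cj b = N \<odot> d" using ib cbd by (simp_all add: d_def)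
  have a: "a = - (I \<odot> b)" using z by (simp add: eq_neg_iff_add_eq_0)
  have ca: "cj a = cj b \<odot> I" using a SA_cj[OF I] by (simp add: cj_mul)
  have as1: "as b (cj b) I = 0" using cbd' cen_asm2[OF Nc, of b d I] inv_prop_all(2)[OF ib', of I] by simp
  have as2: "as I b (cj b) = 0" using cbd' cen_asm3[OF Nc, of I b d] inv_prop_all(3)[OF ib', of I] by simp
  have "a \<odot> cj b + b \<odot> cj a = - ((I \<odot> b) \<odot> cj b) + b \<odot> (cj b \<odot> I)" using a ca by simp
  also have "\<dots> = - (as I b (cj b) + I \<odot> (b \<odot> cj b)) + ((b \<odot> cj b) \<odot> I - as b (cj b) I)"
    by (simp add: as_def)
  also have "\<dots> = 0" using as1 as2 bN cen_comm[OF Nc, of I] by simp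
  finally have G2: "a \<odot> cj b + b \<odot> cj a = 0" .
  have "a \<odot> cj a = - ((I \<odot> b) \<odot> (cj b \<odot> I))" using a ca by simp
  also have "\<dots> = - (I \<odot> ((b \<odot> cj b) \<odot> I))" by (simp add: midM)
  also have "\<dots> = - (I \<odot> (I \<odot> N))" using bN cen_comm[OF Nc, of I] by simp
  also have "\<dots> = - ((I \<odot> I) \<odot> N)" by (simp add: altl)
  also have "\<dots> = N" using SA_sq[OF I] by simp
  finally have G1: "a \<odot> cj a - b \<odot> cj b = 0" using bN by simp
  show ?thesis using G1 G2 by simp
qed

lemma K3:
  assumes J: "J \<in> SA mul e cj" and z: "a + J \<odot> b = 0"
  shows "(cj a \<odot> a - cj b \<odot> b) + (- J) \<odot> (cj a \<odot> b + cj b \<odot> a) = 0"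
proof -
  have a: "a = - (J \<odot> b)" using z by (simp add: eq_neg_iff_add_eq_0)
  have ca: "cj a = cj b \<odot> J" using a SA_cj[OF J] by (simp add: cj_mul)
  have key: "(u \<odot> J) \<odot> (J \<odot> v) = - (u \<odot> v) - J \<odot> as u J v" for u v
  proof -
    have "(u \<odot> J) \<odot> (J \<odot> v) = ((u \<odot> J) \<odot> J) \<odot> v - as (u \<odot> J) J v" by (simp add: as_def)
    also have "\<dots> = (u \<odot> (J \<odot> J)) \<odot> v - J \<odot> as u J v" by (simp add: altr Kf)
    finally show ?thesis using SA_sq[OF J] by simp
  qed
  have H1: "cj a \<odot> a - cj b \<odot> b = J \<odot> as (cj b) J b" using a ca key[of "cj b" b] by simp
  have H2: "cj a \<odot> b + cj b \<odot> a = as (cj b) J b" using a ca by (simp add: as_def)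
  show ?thesis using H1 H2 by simp
qed

end


context altalg begin

lemma K2:
  assumes b: "b \<in> CA mul e cj" "b \<noteq> 0" and I: "I \<in> SA mul e cj" and I': "I' \<in> SA mul e cj"
    and z: "a + I \<odot> b = 0" and z': "a + I' \<odot> b = 0"
  shows "I = I'"
proof -
  obtain N Ni where ib: "inv2 b (Ni \<odot> cj b)" using CA_struct[OF b] by metis
  have "I \<odot> b = I' \<odot> b" using z z' by (metis add_left_cancel)
  hence "(I - I') \<odot> b = 0" by simp
  hence "I - I' = 0" by (rule rcancel[OF ib])
  thus ?thesis by simp
qed

lemma K1:
  assumes b: "b \<in> CA mul e cj" and I: "I \<in> SA mul e cj" and z: "a + I \<odot> b = 0"
  shows "\<exists>I'\<in>SA mul e cj. cj a + I' \<odot> cj b = 0"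
proof (cases "b = 0")
  case True thus ?thesis using z I by auto
next
  case False
  define c where "c = cj b"
  have c: "c \<in> CA mul e cj" "c \<noteq> 0" using CA_cj[OF b] False unfolding c_def by (auto, metis cj_cj cj_0)
  have cc: "cj c = b" by (simp add: c_def)
  obtain N Ni where Nc: "N \<in> centerA mul" and Nic: "Ni \<in> centerA mul" and NNi: "inv2 N Ni"
    and cN: "c \<odot> cj c = N" and cNi: "cj Ni = Ni" and ic: "inv2 c (Ni \<odot> cj c)"
    and cbd: "cj c = N \<odot> (Ni \<odot> cj c)"
    using CA_struct[OF c] by metis
  define dc where "dc = Ni \<odot> b"
  have ic': "inv2 c dc" and bN: "b = N \<odot> dc" using ic cbd cc by (simp_all add: dc_def)
  have dcc: "dc \<odot> c = e" and cdc: "c \<odot> dc = e" using ic' by (auto simp: inv2_def)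
  have a: "a = - (I \<odot> b)" using z by (simp add: eq_neg_iff_add_eq_0)
  have ca: "cj a = c \<odot> I" using a SA_cj[OF I] by (simp add: cj_mul c_def)
  define I' where "I' = - ((c \<odot> I) \<odot> dc)"
  have I'c: "I' \<odot> c = - (c \<odot> I)"
  proof -
    have "((c \<odot> I) \<odot> dc) \<odot> c = (c \<odot> I) \<odot> (dc \<odot> c)"
      using inv_prop_all(4)[OF ic', of "c \<odot> I"] by (simp add: as_def)
    thus ?thesis using dcc by (simp add: I'_def)
  qed
  have eq: "cj a + I' \<odot> cj b = 0" using ca I'c by (simp add: c_def[symmetric])
  have cjdc: "cj dc = Ni \<odot> c" using cNi cen_comm[OF Nic, of c] by (simp add: dc_def cj_mul c_def)
  have cI': "cj I' = Ni \<odot> (c \<odot> (I \<odot> b))"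
  proof -
    have "cj I' = cj dc \<odot> (I \<odot> b)" using SA_cj[OF I] by (simp add: I'_def cj_mul cc)
    thus ?thesis using cjdc cen_p1[OF Nic] by simp
  qed
  have I'2: "I' = - (Ni \<odot> ((c \<odot> I) \<odot> b))" using cen_p2[OF Nic, of "c \<odot> I" b] by (simp add: I'_def dc_def)
  have asz: "as c I b = 0" using bN cen_asm3[OF Nc, of c I dc] inv_prop_all(5)[OF ic', of I] by simp
  have tr: "cj I' = - I'"
  proof -
    have "c \<odot> (I \<odot> b) = (c \<odot> I) \<odot> b" using asz by (simp add: as_def)
    thus ?thesis using cI' I'2 by simp
  qed
  have I'I'c: "(I' \<odot> I') \<odot> c = - c"
  proof -
    have s1: "(I' \<odot> I') \<odot> c = - (I' \<odot> (c \<odot> I))" using I'c by (simp add: altl)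
    have s2: "dc \<odot> (c \<odot> I) = I" using inv_prop_all(1)[OF ic', of I] dcc by (simp add: as_def)
    have "I' \<odot> (c \<odot> I) = - (((c \<odot> I) \<odot> dc) \<odot> (c \<odot> I))" by (simp add: I'_def)
    also have "\<dots> = - ((c \<odot> I) \<odot> (dc \<odot> (c \<odot> I)))" by (simp add: flex)
    also have "\<dots> = - ((c \<odot> I) \<odot> I)" using s2 by simp
    also have "\<dots> = c" using SA_sq[OF I] by (simp add: altr)
    finally show ?thesis using s1 by simp
  qed
  have "(I' \<odot> I' + e) \<odot> c = 0" using I'I'c by simp
  hence "I' \<odot> I' + e = 0" by (rule rcancel[OF ic'])
  hence sq: "I' \<odot> I' = - e" by (simp add: eq_neg_iff_add_eq_0)
  have "I' \<in> SA mul e cj" by (rule SA_I[OF tr sq])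
  thus ?thesis using eq by blast
qed

lemma K4:
  assumes b: "b \<in> CA mul e cj" "b \<noteq> 0" and h1: "a \<odot> cj a = b \<odot> cj b" and h2: "cj a \<odot> a = cj b \<odot> b"
    and h3: "a \<odot> cj b + b \<odot> cj a = 0"
  shows "\<exists>I\<in>SA mul e cj. a + I \<odot> b = 0"
proof -
  obtain N Ni where Nc: "N \<in> centerA mul" and Nic: "Ni \<in> centerA mul" and NNi: "inv2 N Ni"
    and bN: "b \<odot> cj b = N" and cbN: "cj b \<odot> b = N" and cNi: "cj Ni = Ni" and ib: "inv2 b (Ni \<odot> cj b)"
    and cbd: "cj b = N \<odot> (Ni \<odot> cj b)"
    using CA_struct[OF b] by metis
  have NNi': "N \<odot> Ni = e" "Ni \<odot> N = e" using NNi by (auto simp: inv2_def)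
  define d where "d = Ni \<odot> cj b"
  have ib': "inv2 b d" and cbd': "cj b = N \<odot> d" using ib cbd by (simp_all add: d_def)
  define da where "da = Ni \<odot> cj a"
  have ia: "inv2 a da"
  proof -
    have "a \<odot> da = Ni \<odot> (a \<odot> cj a)" using cen_p2[OF Nic] by (simp add: da_def)
    moreover have "da \<odot> a = Ni \<odot> (cj a \<odot> a)" using cen_p1[OF Nic] by (simp add: da_def)
    ultimately show ?thesis using h1 h2 bN cbN NNi' by (simp add: inv2_def)
  qed
  have cad: "cj a = N \<odot> da" using cen_p1[OF Nc, of Ni "cj a"] NNi' by (simp add: da_def)
  define I where "I = - (Ni \<odot> (a \<odot> cj b))"
  have Ib: "I \<odot> b = - a"
  proof -
    have "(a \<odot> cj b) \<odot> b = a \<odot> (cj b \<odot> b) + as a (cj b) b" by (simp add: as_def)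
    also have "\<dots> = a \<odot> N" using cbN cbd' cen_asm2[OF Nc, of a d b] inv_prop_all(4)[OF ib', of a] by simp
    finally have "(a \<odot> cj b) \<odot> b = N \<odot> a" using cen_comm[OF Nc, of a] by simp
    hence "I \<odot> b = - (Ni \<odot> (N \<odot> a))" using cen_p1[OF Nic, of "a \<odot> cj b" b] by (simp add: I_def)
    also have "\<dots> = - a" using cen_p1[OF Nic, of N a] NNi' by simp
    finally show ?thesis .
  qed
  have tr: "cj I = - I"
  proof -
    have "cj I = - ((b \<odot> cj a) \<odot> Ni)" using cNi by (simp add: I_def cj_mul)
    also have "\<dots> = - (Ni \<odot> (b \<odot> cj a))" using cen_comm[OF Nic, of "b \<odot> cj a"] by simp
    finally have x: "cj I = - (Ni \<odot> (b \<odot> cj a))" .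
    have "a \<odot> cj b = - (b \<odot> cj a)" using h3 by (simp add: eq_neg_iff_add_eq_0)
    thus ?thesis using x by (simp add: I_def)
  qed
  have Ia: "I \<odot> a = b"
  proof -
    have h3': "a \<odot> cj b = - (b \<odot> cj a)" using h3 by (simp add: eq_neg_iff_add_eq_0)
    have "(a \<odot> cj b) \<odot> a = - ((b \<odot> cj a) \<odot> a)" by (simp add: h3')
    also have "\<dots> = - (b \<odot> (cj a \<odot> a) + as b (cj a) a)" by (simp add: as_def)
    also have "\<dots> = - (N \<odot> b)" using h2 cbN cad cen_asm2[OF Nc, of b da a] inv_prop_all(4)[OF ia, of b]
      cen_comm[OF Nc, of b] by simp
    finally have "(a \<odot> cj b) \<odot> a = - (N \<odot> b)" .
    hence "I \<odot> a = Ni \<odot> (N \<odot> b)" using cen_p1[OF Nic, of "a \<odot> cj b" a] by (simp add: I_def)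
    also have "\<dots> = b" using cen_p1[OF Nic, of N b] NNi' by simp
    finally show ?thesis .
  qed
  have "(I \<odot> I + e) \<odot> b = 0"
  proof -
    have "(I \<odot> I) \<odot> b = I \<odot> (I \<odot> b)" by (simp add: altl)
    thus ?thesis using Ib Ia by simp
  qed
  hence "I \<odot> I + e = 0" by (rule rcancel[OF ib'])
  hence sq: "I \<odot> I = - e" by (simp add: eq_neg_iff_add_eq_0)
  have "I \<in> SA mul e cj" by (rule SA_I[OF tr sq])
  thus ?thesis using Ib by (intro bexI[of _ I]) simp_all
qed

lemma K6: assumes "a \<in> CA mul e cj" "a \<odot> cj a = 0" shows "a = 0"
proof (rule ccontr)
  assume "a \<noteq> 0"
  hence "invertibleA mul e (nA mul cj a)" using assms(1) by (simp add: CA_def)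
  hence "invertibleA mul e 0" using assms(2) by (simp add: nA_def)
  thus False using e_nz by (simp add: invertibleA_def)
qed

lemma CA_nn: assumes "a \<in> CA mul e cj" "a \<noteq> 0" shows "cj a \<odot> a = a \<odot> cj a"
  using CA_struct[OF assms] by metis

end


context altalg begin

lemma dbl0: "(v::'b::real_vector) + v = 0 \<Longrightarrow> v = 0"
proof -
  assume "v + v = 0" hence "2 *\<^sub>R v = 0" by (simp add: scaleR_2)
  thus ?thesis by simp
qed

lemma lin_indep: assumes J: "J \<in> SA mul e cj" and h: "r *\<^sub>R e + s *\<^sub>R J = 0" shows "r = 0 \<and> s = 0"
proof -
  have s: "s = 0"
  proof (rule ccontr)
    assume s: "s \<noteq> 0"
    have "s *\<^sub>R J = - (r *\<^sub>R e)" using h by (simp only: add_eq_0_iff)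
    hence "(1/s) *\<^sub>R (s *\<^sub>R J) = (1/s) *\<^sub>R (- (r *\<^sub>R e))" by simp
    hence Je: "J = (- (r / s)) *\<^sub>R e" using s by simp
    define c where "c = - (r / s)"
    have "J \<odot> J = (c * c) *\<^sub>R e" using Je by (simp add: c_def)
    hence "(c * c) *\<^sub>R e = - e" using SA_sq[OF J] by simp
    hence "(c * c) *\<^sub>R e + e = 0" by simp
    hence "(c * c + 1) *\<^sub>R e = 0" by (simp add: scaleR_left_distrib)
    moreover have "c * c + 1 \<noteq> 0" by (metis add_nonneg_pos zero_le_square zero_less_one order_less_irrefl)
    ultimately show False using e_nz by simp
  qed
  thus ?thesis using h e_nz by simp
qed

lemma notreal: "J \<in> SA mul e cj \<Longrightarrow> \<beta> \<noteq> 0 \<Longrightarrow> \<alpha> *\<^sub>R e + \<beta> *\<^sub>R J \<notin> realA e"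
proof
  assume J: "J \<in> SA mul e cj" and b: "\<beta> \<noteq> 0" and "\<alpha> *\<^sub>R e + \<beta> *\<^sub>R J \<in> realA e"
  then obtain r where "\<alpha> *\<^sub>R e + \<beta> *\<^sub>R J = r *\<^sub>R e" by (auto simp: realA_def)
  hence "(\<alpha> - r) *\<^sub>R e + \<beta> *\<^sub>R J = 0" by (simp add: algebra_simps)
  thus False using lin_indep[OF J] b by blast
qed

lemma rep_unique:
  assumes J: "J \<in> SA mul e cj" and J': "J' \<in> SA mul e cj"
    and h: "\<alpha> *\<^sub>R e + \<beta> *\<^sub>R J = \<alpha>' *\<^sub>R e + \<beta>' *\<^sub>R J'"
  shows "\<alpha>' = \<alpha> \<and> ((\<beta>' = \<beta> \<and> (\<beta> = 0 \<or> J' = J)) \<or> (\<beta>' = - \<beta> \<and> (\<beta> = 0 \<or> J' = - J)))"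
proof -
  have "cj (\<alpha> *\<^sub>R e + \<beta> *\<^sub>R J) = cj (\<alpha>' *\<^sub>R e + \<beta>' *\<^sub>R J')" using h by simp
  hence h2: "\<alpha> *\<^sub>R e - \<beta> *\<^sub>R J = \<alpha>' *\<^sub>R e - \<beta>' *\<^sub>R J'" using SA_cj[OF J] SA_cj[OF J'] by simp
  have "(\<alpha> *\<^sub>R e + \<beta> *\<^sub>R J) + (\<alpha> *\<^sub>R e - \<beta> *\<^sub>R J) = (\<alpha>' *\<^sub>R e + \<beta>' *\<^sub>R J') + (\<alpha>' *\<^sub>R e - \<beta>' *\<^sub>R J')"
    using h h2 by simp
  hence "\<alpha> *\<^sub>R e + \<alpha> *\<^sub>R e = \<alpha>' *\<^sub>R e + \<alpha>' *\<^sub>R e" by (simp add: algebra_simps)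
  hence "(\<alpha> - \<alpha>') *\<^sub>R e + (\<alpha> - \<alpha>') *\<^sub>R e = 0" by (simp add: scaleR_diff_left algebra_simps)
  hence "(\<alpha> - \<alpha>') *\<^sub>R e = 0" by (rule dbl0)
  hence a: "\<alpha>' = \<alpha>" using e_nz by simp
  hence bJ: "\<beta> *\<^sub>R J = \<beta>' *\<^sub>R J'" using h by simp
  have "(\<beta> *\<^sub>R J) \<odot> (\<beta> *\<^sub>R J) = (\<beta>' *\<^sub>R J') \<odot> (\<beta>' *\<^sub>R J')" using bJ by simp
  hence "(\<beta> * \<beta>) *\<^sub>R e = (\<beta>' * \<beta>') *\<^sub>R e" using SA_sq[OF J] SA_sq[OF J'] by simp
  hence "\<beta> * \<beta> = \<beta>' * \<beta>'" using e_nz by simp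
  hence bb: "\<beta>' = \<beta> \<or> \<beta>' = - \<beta>" by (metis minus_mult_minus mult_cancel_left square_eq_iff)
  show ?thesis
  proof (cases "\<beta> = 0")
    case True thus ?thesis using a bb by auto
  next
    case False
    from bb show ?thesis
    proof
      assume "\<beta>' = \<beta>" thus ?thesis using bJ False a by simp
    next
      assume b': "\<beta>' = - \<beta>"
      hence "\<beta> *\<^sub>R J = \<beta> *\<^sub>R (- J')" using bJ by simp
      hence "J = - J'" using False by (metis scaleR_minus_right scaleR_cancel_left)
      hence "J' = - J" by simp
      thus ?thesis using a b' by simp
    qed
  qed
qed

lemma stem_real: "is_stem D G1 G2 \<Longrightarrow> Complex \<alpha> 0 \<in> D \<Longrightarrow> G2 (Complex \<alpha> 0) = 0"
proof -
  assume "is_stem D G1 G2" "Complex \<alpha> 0 \<in> D"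
  hence "G2 (cnj (Complex \<alpha> 0)) = - G2 (Complex \<alpha> 0)" by (simp add: is_stem_def)
  hence "G2 (Complex \<alpha> 0) = - G2 (Complex \<alpha> 0)" by (simp add: complex_cnj)
  hence "G2 (Complex \<alpha> 0) + G2 (Complex \<alpha> 0) = 0" by (simp add: eq_neg_iff_add_eq_0)
  thus ?thesis by (rule dbl0)
qed

lemma eval:
  assumes st: "is_stem D G1 G2" and z: "Complex \<alpha> \<beta> \<in> D" and J: "J \<in> SA mul e cj"
  shows "sliceI mul e cj D G1 G2 (\<alpha> *\<^sub>R e + \<beta> *\<^sub>R J) = G1 (Complex \<alpha> \<beta>) + J \<odot> G2 (Complex \<alpha> \<beta>)"
  unfolding sliceI_def
proof (rule someI2_ex)
  show "\<exists>v \<alpha>' \<beta>' J'. J' \<in> SA mul e cj \<and> Complex \<alpha>' \<beta>' \<in> D \<and>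
        \<alpha> *\<^sub>R e + \<beta> *\<^sub>R J = \<alpha>' *\<^sub>R e + \<beta>' *\<^sub>R J' \<and> v = G1 (Complex \<alpha>' \<beta>') + J' \<odot> G2 (Complex \<alpha>' \<beta>')"
    using J z by blast
next
  fix v assume "\<exists>\<alpha>' \<beta>' J'. J' \<in> SA mul e cj \<and> Complex \<alpha>' \<beta>' \<in> D \<and>
        \<alpha> *\<^sub>R e + \<beta> *\<^sub>R J = \<alpha>' *\<^sub>R e + \<beta>' *\<^sub>R J' \<and> v = G1 (Complex \<alpha>' \<beta>') + J' \<odot> G2 (Complex \<alpha>' \<beta>')"
  then obtain \<alpha>' \<beta>' J' where J': "J' \<in> SA mul e cj" and z': "Complex \<alpha>' \<beta>' \<in> D"
    and h: "\<alpha> *\<^sub>R e + \<beta> *\<^sub>R J = \<alpha>' *\<^sub>R e + \<beta>' *\<^sub>R J'" and v: "v = G1 (Complex \<alpha>' \<beta>') + J' \<odot> G2 (Complex \<alpha>' \<beta>')"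
    by blast
  have cz: "G1 (Complex \<alpha> (- \<beta>)) = G1 (Complex \<alpha> \<beta>) \<and> G2 (Complex \<alpha> (- \<beta>)) = - G2 (Complex \<alpha> \<beta>)"
    using st z unfolding is_stem_def by (metis complex_cnj)
  from rep_unique[OF J J' h] have a: "\<alpha>' = \<alpha>" and
    c: "(\<beta>' = \<beta> \<and> (\<beta> = 0 \<or> J' = J)) \<or> (\<beta>' = - \<beta> \<and> (\<beta> = 0 \<or> J' = - J))" by auto
  show "v = G1 (Complex \<alpha> \<beta>) + J \<odot> G2 (Complex \<alpha> \<beta>)"
  proof (cases "\<beta> = 0")
    case True
    hence "\<beta>' = 0" using c by auto
    thus ?thesis using True v a stem_real[OF st] z by simp
  next
    case False
    hence "(\<beta>' = \<beta> \<and> J' = J) \<or> (\<beta>' = - \<beta> \<and> J' = - J)" using c by auto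
    thus ?thesis using v a cz by auto
  qed
qed

lemma Omega_iff: "x \<in> OmegaD mul e cj D \<longleftrightarrow>
   (\<exists>\<alpha> \<beta> J. Complex \<alpha> \<beta> \<in> D \<and> J \<in> SA mul e cj \<and> x = \<alpha> *\<^sub>R e + \<beta> *\<^sub>R J)"
  unfolding OmegaD_def by blast

lemma Sx_eq: assumes J: "J \<in> SA mul e cj"
  shows "Sx mul e cj (\<alpha> *\<^sub>R e + \<beta> *\<^sub>R J) = {\<alpha> *\<^sub>R e + \<beta> *\<^sub>R I | I. I \<in> SA mul e cj}"
proof
  show "{\<alpha> *\<^sub>R e + \<beta> *\<^sub>R I | I. I \<in> SA mul e cj} \<subseteq> Sx mul e cj (\<alpha> *\<^sub>R e + \<beta> *\<^sub>R J)"
    using J unfolding Sx_def by blast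
next
  show "Sx mul e cj (\<alpha> *\<^sub>R e + \<beta> *\<^sub>R J) \<subseteq> {\<alpha> *\<^sub>R e + \<beta> *\<^sub>R I | I. I \<in> SA mul e cj}"
  proof
    fix y assume "y \<in> Sx mul e cj (\<alpha> *\<^sub>R e + \<beta> *\<^sub>R J)"
    then obtain \<alpha>' \<beta>' J' I' where J': "J' \<in> SA mul e cj" and I': "I' \<in> SA mul e cj"
      and h: "\<alpha> *\<^sub>R e + \<beta> *\<^sub>R J = \<alpha>' *\<^sub>R e + \<beta>' *\<^sub>R J'" and y: "y = \<alpha>' *\<^sub>R e + \<beta>' *\<^sub>R I'"
      unfolding Sx_def by blast
    from rep_unique[OF J J' h] have a: "\<alpha>' = \<alpha>" and b: "\<beta>' = \<beta> \<or> \<beta>' = - \<beta>" by auto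
    from b show "y \<in> {\<alpha> *\<^sub>R e + \<beta> *\<^sub>R I | I. I \<in> SA mul e cj}"
    proof
      assume "\<beta>' = \<beta>" thus ?thesis using y a I' by blast
    next
      assume "\<beta>' = - \<beta>"
      hence "y = \<alpha> *\<^sub>R e + \<beta> *\<^sub>R (- I')" using y a by simp
      thus ?thesis using SA_neg[OF I'] by blast
    qed
  qed
qed

lemma stem_cj: "is_stem D G1 G2 \<Longrightarrow> is_stem D (cj \<circ> G1) (cj \<circ> G2)"
  by (simp add: is_stem_def)

lemma stem_mul: "is_stem D F1 F2 \<Longrightarrow> is_stem D G1 G2 \<Longrightarrow>
   is_stem D (stem_mul1 mul F1 F2 G1 G2) (stem_mul2 mul F1 F2 G1 G2)"
  by (simp add: is_stem_def stem_mul1_def stem_mul2_def)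

end



context altalg begin
lemma sa_extract: assumes J: "J \<in> SA mul e cj" and h: "\<forall>I\<in>SA mul e cj. P + I \<odot> Q = 0"
  shows "P = 0 \<and> Q = 0"
proof -
  have 1: "P + J \<odot> Q = 0" using h J by blast
  have 2: "P + (- J) \<odot> Q = 0" using h SA_neg[OF J] by blast
  have "P + P = 0" using 1 2
    by (metis add.assoc add.commute add.right_neutral ml_neg neg_eq_iff_add_eq_0)
  hence P: "P = 0" by (rule dbl0)
  hence "J \<odot> Q = 0" using 1 by simp
  hence "J \<odot> (J \<odot> Q) = 0" by simp
  hence "- Q = 0" using altl[of J Q] SA_sq[OF J] by simp
  thus ?thesis using P by simp
qed
end

locale stemctx = altalg +
  fixes D :: "complex set" and G1 G2 :: "complex \<Rightarrow> 'a"
  assumes st: "is_stem D G1 G2"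
begin

abbreviation "\<Omega> \<equiv> OmegaD mul e cj D"
abbreviation "g \<equiv> sliceI mul e cj D G1 G2"
abbreviation "gc \<equiv> sliceI mul e cj D (cj \<circ> G1) (cj \<circ> G2)"
abbreviation "Ng \<equiv> sliceI mul e cj D (stem_mul1 mul G1 G2 (cj \<circ> G1) (cj \<circ> G2))
                                      (stem_mul2 mul G1 G2 (cj \<circ> G1) (cj \<circ> G2))"
abbreviation "Ngc \<equiv> sliceI mul e cj D (stem_mul1 mul (cj \<circ> G1) (cj \<circ> G2) (cj \<circ> (cj \<circ> G1)) (cj \<circ> (cj \<circ> G2)))
                                      (stem_mul2 mul (cj \<circ> G1) (cj \<circ> G2) (cj \<circ> (cj \<circ> G1)) (cj \<circ> (cj \<circ> G2)))"

lemma stc: "is_stem D (cj \<circ> G1) (cj \<circ> G2)" by (rule stem_cj[OF st])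

lemma vg: "Complex \<alpha> \<beta> \<in> D \<Longrightarrow> I \<in> SA mul e cj \<Longrightarrow>
   g (\<alpha> *\<^sub>R e + \<beta> *\<^sub>R I) = G1 (Complex \<alpha> \<beta>) + I \<odot> G2 (Complex \<alpha> \<beta>)"
  by (rule eval[OF st])
lemma vgc: "Complex \<alpha> \<beta> \<in> D \<Longrightarrow> I \<in> SA mul e cj \<Longrightarrow>
   gc (\<alpha> *\<^sub>R e + \<beta> *\<^sub>R I) = cj (G1 (Complex \<alpha> \<beta>)) + I \<odot> cj (G2 (Complex \<alpha> \<beta>))"
  using eval[OF stc] by simp
lemma vN: "Complex \<alpha> \<beta> \<in> D \<Longrightarrow> I \<in> SA mul e cj \<Longrightarrow>
   Ng (\<alpha> *\<^sub>R e + \<beta> *\<^sub>R I) = (G1 (Complex \<alpha> \<beta>) \<odot> cj (G1 (Complex \<alpha> \<beta>)) - G2 (Complex \<alpha> \<beta>) \<odot> cj (G2 (Complex \<alpha> \<beta>)))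
     + I \<odot> (G1 (Complex \<alpha> \<beta>) \<odot> cj (G2 (Complex \<alpha> \<beta>)) + G2 (Complex \<alpha> \<beta>) \<odot> cj (G1 (Complex \<alpha> \<beta>)))"
  using eval[OF stem_mul[OF st stc]] by (simp add: stem_mul1_def stem_mul2_def)
lemma vNc: "Complex \<alpha> \<beta> \<in> D \<Longrightarrow> I \<in> SA mul e cj \<Longrightarrow>
   Ngc (\<alpha> *\<^sub>R e + \<beta> *\<^sub>R I) = (cj (G1 (Complex \<alpha> \<beta>)) \<odot> G1 (Complex \<alpha> \<beta>) - cj (G2 (Complex \<alpha> \<beta>)) \<odot> G2 (Complex \<alpha> \<beta>))
     + I \<odot> (cj (G1 (Complex \<alpha> \<beta>)) \<odot> G2 (Complex \<alpha> \<beta>) + cj (G2 (Complex \<alpha> \<beta>)) \<odot> G1 (Complex \<alpha> \<beta>))"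
  using eval[OF stem_mul[OF stc stem_cj[OF stc]]] by (simp add: stem_mul1_def stem_mul2_def)

lemma inO: "Complex \<alpha> \<beta> \<in> D \<Longrightarrow> I \<in> SA mul e cj \<Longrightarrow> \<alpha> *\<^sub>R e + \<beta> *\<^sub>R I \<in> \<Omega>"
  unfolding Omega_iff by blast

lemma sph_sub: "Complex \<alpha> \<beta> \<in> D \<Longrightarrow> J \<in> SA mul e cj \<Longrightarrow> Sx mul e cj (\<alpha> *\<^sub>R e + \<beta> *\<^sub>R J) \<subseteq> \<Omega>"
  using Sx_eq inO by auto

lemma self_Sx: "J \<in> SA mul e cj \<Longrightarrow> \<alpha> *\<^sub>R e + \<beta> *\<^sub>R J \<in> Sx mul e cj (\<alpha> *\<^sub>R e + \<beta> *\<^sub>R J)"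
  using Sx_eq by auto

lemma part1: "Vz \<Omega> g \<subseteq> cj ` Vz \<Omega> Ngc"
proof
  fix x assume "x \<in> Vz \<Omega> g"
  then obtain \<alpha> \<beta> J where z: "Complex \<alpha> \<beta> \<in> D" and J: "J \<in> SA mul e cj" and x: "x = \<alpha> *\<^sub>R e + \<beta> *\<^sub>R J"
    and g0: "g x = 0" unfolding Vz_def Omega_iff by blast
  have zz: "G1 (Complex \<alpha> \<beta>) + J \<odot> G2 (Complex \<alpha> \<beta>) = 0" using g0 vg[OF z J] x by simp
  have "cj x = \<alpha> *\<^sub>R e + \<beta> *\<^sub>R (- J)" using x SA_cj[OF J] by simp
  moreover have "Ngc (\<alpha> *\<^sub>R e + \<beta> *\<^sub>R (- J)) = 0" using vNc[OF z SA_neg[OF J]] K3[OF J zz] by simp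
  ultimately have "cj x \<in> Vz \<Omega> Ngc" using inO[OF z SA_neg[OF J]] by (simp add: Vz_def)
  moreover have "x = cj (cj x)" by simp
  ultimately show "x \<in> cj ` Vz \<Omega> Ngc" by blast
qed

end



context stemctx begin

lemma zero_g: "Complex \<alpha> \<beta> \<in> D \<Longrightarrow> I \<in> SA mul e cj \<Longrightarrow> G1 (Complex \<alpha> \<beta>) + I \<odot> G2 (Complex \<alpha> \<beta>) = 0
   \<Longrightarrow> \<alpha> *\<^sub>R e + \<beta> *\<^sub>R I \<in> Vz \<Omega> g"
  using vg inO by (simp add: Vz_def)
lemma zero_gc: "Complex \<alpha> \<beta> \<in> D \<Longrightarrow> I \<in> SA mul e cj \<Longrightarrow> cj (G1 (Complex \<alpha> \<beta>)) + I \<odot> cj (G2 (Complex \<alpha> \<beta>)) = 0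
   \<Longrightarrow> \<alpha> *\<^sub>R e + \<beta> *\<^sub>R I \<in> Vz \<Omega> gc"
  using vgc inO by (simp add: Vz_def)

lemma sphN:
  assumes CA2: "\<forall>z\<in>D. G2 z \<in> CA mul e cj" and x: "x \<in> Vz \<Omega> g"
  shows "Sx mul e cj x \<subseteq> Vz \<Omega> Ng \<and> Sx mul e cj x \<subseteq> Vz \<Omega> Ngc"
proof -
  obtain \<alpha> \<beta> J where z: "Complex \<alpha> \<beta> \<in> D" and J: "J \<in> SA mul e cj" and xx: "x = \<alpha> *\<^sub>R e + \<beta> *\<^sub>R J"
    and g0: "g x = 0" using x unfolding Vz_def Omega_iff by blast
  define a where "a = G1 (Complex \<alpha> \<beta>)"
  define b where "b = G2 (Complex \<alpha> \<beta>)"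
  have b: "b \<in> CA mul e cj" using CA2 z by (simp add: b_def)
  have zz: "a + J \<odot> b = 0" using g0 vg[OF z J] xx by (simp add: a_def b_def)
  have G: "a \<odot> cj a - b \<odot> cj b = 0 \<and> a \<odot> cj b + b \<odot> cj a = 0" by (rule K0[OF b J zz])
  obtain I' where I': "I' \<in> SA mul e cj" and zc: "cj a + I' \<odot> cj b = 0" using K1[OF b J zz] by blast
  have H: "cj a \<odot> cj (cj a) - cj b \<odot> cj (cj b) = 0 \<and> cj a \<odot> cj (cj b) + cj b \<odot> cj (cj a) = 0"
    by (rule K0[OF CA_cj[OF b] I' zc])
  show ?thesis
  proof (intro conjI subsetI)
    fix y assume "y \<in> Sx mul e cj x"
    then obtain I where I: "I \<in> SA mul e cj" and y: "y = \<alpha> *\<^sub>R e + \<beta> *\<^sub>R I" using Sx_eq[OF J] xx by auto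
    have "Ng y = (a \<odot> cj a - b \<odot> cj b) + I \<odot> (a \<odot> cj b + b \<odot> cj a)"
      using vN[OF z I] y by (simp only: a_def b_def)
    also have "\<dots> = 0" using G by (simp only: mr_0 add_0_right)
    finally show "y \<in> Vz \<Omega> Ng" using inO[OF z I] y by (simp add: Vz_def)
    have "Ngc y = (cj a \<odot> cj (cj a) - cj b \<odot> cj (cj b)) + I \<odot> (cj a \<odot> cj (cj b) + cj b \<odot> cj (cj a))"
      using vNc[OF z I] y by (simp only: a_def b_def cj_cj)
    also have "\<dots> = 0" using H by (simp only: mr_0 add_0_right)
    finally show "y \<in> Vz \<Omega> Ngc" using inO[OF z I] y by (simp add: Vz_def)
  qed
qed

lemma USN: "\<forall>z\<in>D. G2 z \<in> CA mul e cj \<Longrightarrow> USx mul e cj (Vz \<Omega> g) \<subseteq> Vz \<Omega> Ng"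
  using sphN unfolding USx_def by blast

lemma conjzero:
  assumes CA2: "\<forall>z\<in>D. G2 z \<in> CA mul e cj" and x: "x \<in> Vz \<Omega> g"
  shows "\<exists>x'\<in>Vz \<Omega> gc. Sx mul e cj x' = Sx mul e cj x"
proof -
  obtain \<alpha> \<beta> J where z: "Complex \<alpha> \<beta> \<in> D" and J: "J \<in> SA mul e cj" and xx: "x = \<alpha> *\<^sub>R e + \<beta> *\<^sub>R J"
    and g0: "g x = 0" using x unfolding Vz_def Omega_iff by blast
  have b: "G2 (Complex \<alpha> \<beta>) \<in> CA mul e cj" using CA2 z by simp
  have zz: "G1 (Complex \<alpha> \<beta>) + J \<odot> G2 (Complex \<alpha> \<beta>) = 0" using g0 vg[OF z J] xx by simp
  obtain I' where I': "I' \<in> SA mul e cj" and zc: "cj (G1 (Complex \<alpha> \<beta>)) + I' \<odot> cj (G2 (Complex \<alpha> \<beta>)) = 0"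
    using K1[OF b J zz] by blast
  have "\<alpha> *\<^sub>R e + \<beta> *\<^sub>R I' \<in> Vz \<Omega> gc" by (rule zero_gc[OF z I' zc])
  moreover have "Sx mul e cj (\<alpha> *\<^sub>R e + \<beta> *\<^sub>R I') = Sx mul e cj x" using Sx_eq[OF J] Sx_eq[OF I'] xx by simp
  ultimately show ?thesis by blast
qed

lemma USconj: "\<forall>z\<in>D. G2 z \<in> CA mul e cj \<Longrightarrow> USx mul e cj (Vz \<Omega> g) \<subseteq> USx mul e cj (Vz \<Omega> gc)"
proof
  fix y assume CA2: "\<forall>z\<in>D. G2 z \<in> CA mul e cj" and "y \<in> USx mul e cj (Vz \<Omega> g)"
  then obtain x where x: "x \<in> Vz \<Omega> g" and y: "y \<in> Sx mul e cj x" unfolding USx_def by blast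
  obtain x' where "x' \<in> Vz \<Omega> gc" "Sx mul e cj x' = Sx mul e cj x" using conjzero[OF CA2 x] by blast
  thus "y \<in> USx mul e cj (Vz \<Omega> gc)" using y unfolding USx_def by blast
qed

lemma sph_vals:
  assumes x: "x \<in> \<Omega>"
  obtains \<alpha> \<beta> J where "Complex \<alpha> \<beta> \<in> D" "J \<in> SA mul e cj" "x = \<alpha> *\<^sub>R e + \<beta> *\<^sub>R J"
    "Sx mul e cj x = {\<alpha> *\<^sub>R e + \<beta> *\<^sub>R I | I. I \<in> SA mul e cj}"
proof -
  obtain \<alpha> \<beta> J where "Complex \<alpha> \<beta> \<in> D" "J \<in> SA mul e cj" "x = \<alpha> *\<^sub>R e + \<beta> *\<^sub>R J"
    using x unfolding Omega_iff by blast
  thus ?thesis using that Sx_eq by blast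
qed

lemma NG0:
  assumes z: "Complex \<alpha> \<beta> \<in> D" and J: "J \<in> SA mul e cj"
    and S: "Sx mul e cj (\<alpha> *\<^sub>R e + \<beta> *\<^sub>R J) \<subseteq> Vz \<Omega> Ng"
  shows "G1 (Complex \<alpha> \<beta>) \<odot> cj (G1 (Complex \<alpha> \<beta>)) - G2 (Complex \<alpha> \<beta>) \<odot> cj (G2 (Complex \<alpha> \<beta>)) = 0 \<and>
         G1 (Complex \<alpha> \<beta>) \<odot> cj (G2 (Complex \<alpha> \<beta>)) + G2 (Complex \<alpha> \<beta>) \<odot> cj (G1 (Complex \<alpha> \<beta>)) = 0"
proof (rule sa_extract[OF J], intro ballI)
  fix I assume I: "I \<in> SA mul e cj"
  have "\<alpha> *\<^sub>R e + \<beta> *\<^sub>R I \<in> Vz \<Omega> Ng" using S Sx_eq[OF J] I by blast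
  thus "G1 (Complex \<alpha> \<beta>) \<odot> cj (G1 (Complex \<alpha> \<beta>)) - G2 (Complex \<alpha> \<beta>) \<odot> cj (G2 (Complex \<alpha> \<beta>)) +
        I \<odot> (G1 (Complex \<alpha> \<beta>) \<odot> cj (G2 (Complex \<alpha> \<beta>)) + G2 (Complex \<alpha> \<beta>) \<odot> cj (G1 (Complex \<alpha> \<beta>))) = 0"
    using vN[OF z I] by (simp add: Vz_def)
qed

lemma NGc0:
  assumes z: "Complex \<alpha> \<beta> \<in> D" and J: "J \<in> SA mul e cj"
    and S: "Sx mul e cj (\<alpha> *\<^sub>R e + \<beta> *\<^sub>R J) \<subseteq> Vz \<Omega> Ngc"
  shows "cj (G1 (Complex \<alpha> \<beta>)) \<odot> G1 (Complex \<alpha> \<beta>) - cj (G2 (Complex \<alpha> \<beta>)) \<odot> G2 (Complex \<alpha> \<beta>) = 0 \<and>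
         cj (G1 (Complex \<alpha> \<beta>)) \<odot> G2 (Complex \<alpha> \<beta>) + cj (G2 (Complex \<alpha> \<beta>)) \<odot> G1 (Complex \<alpha> \<beta>) = 0"
proof (rule sa_extract[OF J], intro ballI)
  fix I assume I: "I \<in> SA mul e cj"
  have "\<alpha> *\<^sub>R e + \<beta> *\<^sub>R I \<in> Vz \<Omega> Ngc" using S Sx_eq[OF J] I by blast
  thus "cj (G1 (Complex \<alpha> \<beta>)) \<odot> G1 (Complex \<alpha> \<beta>) - cj (G2 (Complex \<alpha> \<beta>)) \<odot> G2 (Complex \<alpha> \<beta>) +
        I \<odot> (cj (G1 (Complex \<alpha> \<beta>)) \<odot> G2 (Complex \<alpha> \<beta>) + cj (G2 (Complex \<alpha> \<beta>)) \<odot> G1 (Complex \<alpha> \<beta>)) = 0"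
    using vNc[OF z I] by (simp add: Vz_def)
qed

end



context stemctx begin

lemma sph_hit:
  assumes z: "Complex \<alpha> \<beta> \<in> D" and J: "J \<in> SA mul e cj" and I: "I \<in> SA mul e cj"
    and zz: "G1 (Complex \<alpha> \<beta>) + I \<odot> G2 (Complex \<alpha> \<beta>) = 0"
  shows "Sx mul e cj (\<alpha> *\<^sub>R e + \<beta> *\<^sub>R J) \<subseteq> USx mul e cj (Vz \<Omega> g)"
proof -
  have "\<alpha> *\<^sub>R e + \<beta> *\<^sub>R I \<in> Vz \<Omega> g" by (rule zero_g[OF z I zz])
  moreover have "Sx mul e cj (\<alpha> *\<^sub>R e + \<beta> *\<^sub>R I) = Sx mul e cj (\<alpha> *\<^sub>R e + \<beta> *\<^sub>R J)"
    using Sx_eq[OF J] Sx_eq[OF I] by simp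
  ultimately show ?thesis unfolding USx_def by blast
qed

lemma ex3:
  assumes CA12: "\<forall>z\<in>D. G1 z \<in> CA mul e cj \<and> G2 z \<in> CA mul e cj"
  shows "USx_in mul e cj D (Vz \<Omega> Ng) \<subseteq> USx mul e cj (Vz \<Omega> g)"
proof
  fix y assume "y \<in> USx_in mul e cj D (Vz \<Omega> Ng)"
  then obtain x where x: "x \<in> \<Omega>" and S: "Sx mul e cj x \<subseteq> Vz \<Omega> Ng" and y: "y \<in> Sx mul e cj x"
    unfolding USx_in_def by blast
  obtain \<alpha> \<beta> J where z: "Complex \<alpha> \<beta> \<in> D" and J: "J \<in> SA mul e cj" and xx: "x = \<alpha> *\<^sub>R e + \<beta> *\<^sub>R J"
    using x unfolding Omega_iff by blast
  define a where "a = G1 (Complex \<alpha> \<beta>)"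
  define b where "b = G2 (Complex \<alpha> \<beta>)"
  have a: "a \<in> CA mul e cj" and b: "b \<in> CA mul e cj" using CA12 z by (simp_all add: a_def b_def)
  have G: "a \<odot> cj a - b \<odot> cj b = 0 \<and> a \<odot> cj b + b \<odot> cj a = 0"
    using NG0[OF z J] S xx by (simp add: a_def b_def)
  have "\<exists>I\<in>SA mul e cj. a + I \<odot> b = 0"
  proof (cases "b = 0")
    case True
    hence "a = 0" using G K6[OF a] by simp
    thus ?thesis using True J by auto
  next
    case False
    have bn: "b \<odot> cj b \<noteq> 0" using K6[OF b] False by blast
    have h1: "a \<odot> cj a = b \<odot> cj b" using G by simp
    hence an: "a \<noteq> 0" using bn by auto
    have h2: "cj a \<odot> a = cj b \<odot> b" using h1 CA_nn[OF a an] CA_nn[OF b False] by simp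
    show ?thesis using K4[OF b False h1 h2] G by simp
  qed
  then obtain I where I: "I \<in> SA mul e cj" and zz: "a + I \<odot> b = 0" by blast
  show "y \<in> USx mul e cj (Vz \<Omega> g)" using sph_hit[OF z J I] zz y xx by (auto simp: a_def b_def)
qed

lemma nons:
  assumes ns: "nonsingular mul cj" and CA2: "\<forall>z\<in>D. G2 z \<in> CA mul e cj"
  shows "USx_in mul e cj D (Vz \<Omega> Ng \<inter> Vz \<Omega> Ngc) \<subseteq> USx mul e cj (Vz \<Omega> g)"
proof
  fix y assume "y \<in> USx_in mul e cj D (Vz \<Omega> Ng \<inter> Vz \<Omega> Ngc)"
  then obtain x where x: "x \<in> \<Omega>" and S: "Sx mul e cj x \<subseteq> Vz \<Omega> Ng" "Sx mul e cj x \<subseteq> Vz \<Omega> Ngc"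
    and y: "y \<in> Sx mul e cj x"
    unfolding USx_in_def by blast
  obtain \<alpha> \<beta> J where z: "Complex \<alpha> \<beta> \<in> D" and J: "J \<in> SA mul e cj" and xx: "x = \<alpha> *\<^sub>R e + \<beta> *\<^sub>R J"
    using x unfolding Omega_iff by blast
  define a where "a = G1 (Complex \<alpha> \<beta>)"
  define b where "b = G2 (Complex \<alpha> \<beta>)"
  have b: "b \<in> CA mul e cj" using CA2 z by (simp_all add: b_def)
  have G: "a \<odot> cj a - b \<odot> cj b = 0 \<and> a \<odot> cj b + b \<odot> cj a = 0"
    using NG0[OF z J] S xx by (simp add: a_def b_def)
  have H: "cj a \<odot> a - cj b \<odot> b = 0"
    using NGc0[OF z J] S xx by (simp add: a_def b_def)
  have "\<exists>I\<in>SA mul e cj. a + I \<odot> b = 0"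
  proof (cases "b = 0")
    case True
    hence "a \<odot> cj a = 0" using G by simp
    hence "nA mul cj a = 0" by (simp add: nA_def)
    hence "a = 0" using ns unfolding nonsingular_def by blast
    thus ?thesis using True J by auto
  next
    case False
    have h1: "a \<odot> cj a = b \<odot> cj b" using G by simp
    have h2: "cj a \<odot> a = cj b \<odot> b" using H by simp
    show ?thesis using K4[OF b False h1 h2] G by simp
  qed
  then obtain I where I: "I \<in> SA mul e cj" and zz: "a + I \<odot> b = 0" by blast
  show "y \<in> USx mul e cj (Vz \<Omega> g)" using sph_hit[OF z J I] zz y xx by (auto simp: a_def b_def)
qed

end



context altalg begin
lemma invA_J: assumes J: "J \<in> SA mul e cj" and b: "\<beta> \<noteq> 0"
  shows "invA mul e (\<beta> *\<^sub>R J) = (- (1/\<beta>)) *\<^sub>R J"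
  unfolding invA_def
proof (rule the_equality)
  show "(\<beta> *\<^sub>R J) \<odot> ((- (1/\<beta>)) *\<^sub>R J) = e \<and> ((- (1/\<beta>)) *\<^sub>R J) \<odot> (\<beta> *\<^sub>R J) = e"
    using SA_sq[OF J] b by simp
next
  fix c assume "(\<beta> *\<^sub>R J) \<odot> c = e \<and> c \<odot> (\<beta> *\<^sub>R J) = e"
  hence "\<beta> *\<^sub>R (J \<odot> c) = e" by simp
  hence "(1/\<beta>) *\<^sub>R (\<beta> *\<^sub>R (J \<odot> c)) = (1/\<beta>) *\<^sub>R e" by simp
  hence Jc: "J \<odot> c = (1/\<beta>) *\<^sub>R e" using b by simp
  have "J \<odot> (J \<odot> c) = (J \<odot> J) \<odot> c" by (simp add: altl)
  hence "(1/\<beta>) *\<^sub>R J = - c" using Jc SA_sq[OF J] by simp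
  thus "c = (- (1/\<beta>)) *\<^sub>R J" by (metis minus_minus scaleR_minus_left)
qed
end

context stemctx begin

lemma cjx: "J \<in> SA mul e cj \<Longrightarrow> cj (\<alpha> *\<^sub>R e + \<beta> *\<^sub>R J) = \<alpha> *\<^sub>R e + \<beta> *\<^sub>R (- J)"
  using SA_cj by simp

lemma fsp: assumes z: "Complex \<alpha> \<beta> \<in> D" and J: "J \<in> SA mul e cj" and b: "\<beta> \<noteq> 0"
  shows "fs' mul e cj g (\<alpha> *\<^sub>R e + \<beta> *\<^sub>R J) = (1/\<beta>) *\<^sub>R G2 (Complex \<alpha> \<beta>)"
proof -
  have im: "imA cj (\<alpha> *\<^sub>R e + \<beta> *\<^sub>R J) = \<beta> *\<^sub>R J"
    using SA_cj[OF J] by (simp add: imA_def trA_def algebra_simps scaleR_2[symmetric])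
  have d: "g (\<alpha> *\<^sub>R e + \<beta> *\<^sub>R J) - g (cj (\<alpha> *\<^sub>R e + \<beta> *\<^sub>R J)) = J \<odot> G2 (Complex \<alpha> \<beta>) + J \<odot> G2 (Complex \<alpha> \<beta>)"
    using vg[OF z J] vg[OF z SA_neg[OF J]] cjx[OF J] by simp
  have JJ: "J \<odot> (J \<odot> G2 (Complex \<alpha> \<beta>)) = - G2 (Complex \<alpha> \<beta>)" using altl[of J] SA_sq[OF J] by simp
  show ?thesis unfolding fs'_def im d invA_J[OF J b] using JJ b
    by (simp add: scaleR_2[symmetric])
qed

lemma fs0v: assumes z: "Complex \<alpha> \<beta> \<in> D" and J: "J \<in> SA mul e cj"
  shows "fs0 cj g (\<alpha> *\<^sub>R e + \<beta> *\<^sub>R J) = G1 (Complex \<alpha> \<beta>)"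
proof -
  have "g (\<alpha> *\<^sub>R e + \<beta> *\<^sub>R J) + g (cj (\<alpha> *\<^sub>R e + \<beta> *\<^sub>R J)) = G1 (Complex \<alpha> \<beta>) + G1 (Complex \<alpha> \<beta>)"
    using vg[OF z J] vg[OF z SA_neg[OF J]] cjx[OF J] by simp
  thus ?thesis unfolding fs0_def by (simp add: scaleR_2[symmetric])
qed

lemma hypb: assumes ne: "SA mul e cj \<noteq> {}" and h: "\<forall>x\<in>\<Omega> - realA e. fs' mul e cj g x \<in> CA mul e cj"
  shows "\<forall>z\<in>D. G2 z \<in> CA mul e cj"
proof
  fix z assume zD: "z \<in> D"
  obtain J where J: "J \<in> SA mul e cj" using ne by blast
  define \<alpha> \<beta> where "\<alpha> = Re z" and "\<beta> = Im z"
  have zz: "z = Complex \<alpha> \<beta>" by (simp add: \<alpha>_def \<beta>_def)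
  have z: "Complex \<alpha> \<beta> \<in> D" using zD zz by simp
  show "G2 z \<in> CA mul e cj"
  proof (cases "\<beta> = 0")
    case True thus ?thesis using stem_real[OF st] z zz CA_0 by simp
  next
    case False
    have "\<alpha> *\<^sub>R e + \<beta> *\<^sub>R J \<in> \<Omega> - realA e" using inO[OF z J] notreal[OF J False] by simp
    hence "fs' mul e cj g (\<alpha> *\<^sub>R e + \<beta> *\<^sub>R J) \<in> CA mul e cj" using h by blast
    hence "(1/\<beta>) *\<^sub>R G2 (Complex \<alpha> \<beta>) \<in> CA mul e cj" using fsp[OF z J False] by simp
    hence "\<beta> *\<^sub>R ((1/\<beta>) *\<^sub>R G2 (Complex \<alpha> \<beta>)) \<in> CA mul e cj" by (rule CA_sc)
    thus ?thesis using False zz by simp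
  qed
qed

lemma hypa: assumes ne: "SA mul e cj \<noteq> {}" and h: "\<forall>x\<in>\<Omega>. fs0 cj g x \<in> CA mul e cj"
  shows "\<forall>z\<in>D. G1 z \<in> CA mul e cj"
proof
  fix z assume zD: "z \<in> D"
  obtain J where J: "J \<in> SA mul e cj" using ne by blast
  define \<alpha> \<beta> where "\<alpha> = Re z" and "\<beta> = Im z"
  have zz: "z = Complex \<alpha> \<beta>" by (simp add: \<alpha>_def \<beta>_def)
  have z: "Complex \<alpha> \<beta> \<in> D" using zD zz by simp
  show "G1 z \<in> CA mul e cj" using h inO[OF z J] fs0v[OF z J] zz by auto
qed

end



context stemctx begin

lemma Zf_eq: assumes z: "Complex \<alpha> \<beta> \<in> D" and J: "J \<in> SA mul e cj"
  shows "Sx mul e cj (\<alpha> *\<^sub>R e + \<beta> *\<^sub>R J) \<inter> Vz \<Omega> g =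
     {\<alpha> *\<^sub>R e + \<beta> *\<^sub>R I | I. I \<in> SA mul e cj \<and> G1 (Complex \<alpha> \<beta>) + I \<odot> G2 (Complex \<alpha> \<beta>) = 0}"
  using Sx_eq[OF J] vg[OF z] inO[OF z] unfolding Vz_def by auto

lemma Zc_eq: assumes z: "Complex \<alpha> \<beta> \<in> D" and J: "J \<in> SA mul e cj"
  shows "Sx mul e cj (\<alpha> *\<^sub>R e + \<beta> *\<^sub>R J) \<inter> Vz \<Omega> gc =
     {\<alpha> *\<^sub>R e + \<beta> *\<^sub>R I | I. I \<in> SA mul e cj \<and> cj (G1 (Complex \<alpha> \<beta>)) + I \<odot> cj (G2 (Complex \<alpha> \<beta>)) = 0}"
  using Sx_eq[OF J] vgc[OF z] inO[OF z] unfolding Vz_def by auto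

lemma single_set: assumes "\<And>I'. I' \<in> SA mul e cj \<Longrightarrow> P I' \<Longrightarrow> I' = I" "I \<in> SA mul e cj" "P I"
  shows "{\<alpha> *\<^sub>R e + \<beta> *\<^sub>R I' | I'. I' \<in> SA mul e cj \<and> P I'} = {\<alpha> *\<^sub>R e + \<beta> *\<^sub>R I}"
  using assms by blast

lemma tri:
  assumes CA2: "\<forall>z\<in>D. G2 z \<in> CA mul e cj" and x: "x \<in> \<Omega>"
  shows "(Sx mul e cj x \<inter> Vz \<Omega> g = {} \<and> Sx mul e cj x \<inter> Vz \<Omega> gc = {})
        \<or> ((\<exists>a. Sx mul e cj x \<inter> Vz \<Omega> g = {a}) \<and> (\<exists>b. Sx mul e cj x \<inter> Vz \<Omega> gc = {b}))
        \<or> (Sx mul e cj x \<inter> Vz \<Omega> g = Sx mul e cj x \<and> Sx mul e cj x \<inter> Vz \<Omega> gc = Sx mul e cj x)"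
proof -
  obtain \<alpha> \<beta> J where z: "Complex \<alpha> \<beta> \<in> D" and J: "J \<in> SA mul e cj" and xx: "x = \<alpha> *\<^sub>R e + \<beta> *\<^sub>R J"
    using x unfolding Omega_iff by blast
  define a where "a = G1 (Complex \<alpha> \<beta>)"
  define b where "b = G2 (Complex \<alpha> \<beta>)"
  have b: "b \<in> CA mul e cj" using CA2 z by (simp add: b_def)
  have Zf: "Sx mul e cj x \<inter> Vz \<Omega> g = {\<alpha> *\<^sub>R e + \<beta> *\<^sub>R I | I. I \<in> SA mul e cj \<and> a + I \<odot> b = 0}"
    using Zf_eq[OF z J] xx by (simp add: a_def b_def)
  have Zc: "Sx mul e cj x \<inter> Vz \<Omega> gc = {\<alpha> *\<^sub>R e + \<beta> *\<^sub>R I | I. I \<in> SA mul e cj \<and> cj a + I \<odot> cj b = 0}"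
    using Zc_eq[OF z J] xx by (simp add: a_def b_def)
  have Sxx: "Sx mul e cj x = {\<alpha> *\<^sub>R e + \<beta> *\<^sub>R I | I. I \<in> SA mul e cj}" using Sx_eq[OF J] xx by simp
  show ?thesis
  proof (cases "b = 0")
    case True
    show ?thesis
    proof (cases "a = 0")
      case True
      hence "Sx mul e cj x \<inter> Vz \<Omega> g = Sx mul e cj x \<and> Sx mul e cj x \<inter> Vz \<Omega> gc = Sx mul e cj x"
        using Zf Zc Sxx \<open>b = 0\<close> by simp
      thus ?thesis by blast
    next
      case False
      have "cj a \<noteq> 0" using False by (metis cj_cj cj_0)
      hence "Sx mul e cj x \<inter> Vz \<Omega> g = {} \<and> Sx mul e cj x \<inter> Vz \<Omega> gc = {}"
        using Zf Zc \<open>b = 0\<close> False by simp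
      thus ?thesis by blast
    qed
  next
    case False
    have cb: "cj b \<in> CA mul e cj" "cj b \<noteq> 0" using CA_cj[OF b] False by (auto, metis cj_cj cj_0)
    show ?thesis
    proof (cases "\<exists>I\<in>SA mul e cj. a + I \<odot> b = 0")
      case True
      then obtain I where I: "I \<in> SA mul e cj" and zI: "a + I \<odot> b = 0" by blast
      obtain I' where I': "I' \<in> SA mul e cj" and zI': "cj a + I' \<odot> cj b = 0" using K1[OF b I zI] by blast
      have u1: "\<And>J'. J' \<in> SA mul e cj \<Longrightarrow> a + J' \<odot> b = 0 \<Longrightarrow> J' = I"
      proof -
        fix J' assume "J' \<in> SA mul e cj" "a + J' \<odot> b = 0"
        thus "J' = I" using K2[OF b False I _ zI] by simp
      qed
      have u2: "\<And>J'. J' \<in> SA mul e cj \<Longrightarrow> cj a + J' \<odot> cj b = 0 \<Longrightarrow> J' = I'"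
      proof -
        fix J' assume "J' \<in> SA mul e cj" "cj a + J' \<odot> cj b = 0"
        thus "J' = I'" using K2[OF cb I' _ zI'] by simp
      qed
      have "Sx mul e cj x \<inter> Vz \<Omega> g = {\<alpha> *\<^sub>R e + \<beta> *\<^sub>R I}"
        unfolding Zf using single_set[where P="\<lambda>J'. a + J' \<odot> b = 0", OF u1 I zI] by simp
      moreover have "Sx mul e cj x \<inter> Vz \<Omega> gc = {\<alpha> *\<^sub>R e + \<beta> *\<^sub>R I'}"
        unfolding Zc using single_set[where P="\<lambda>J'. cj a + J' \<odot> cj b = 0", OF u2 I' zI'] by simp
      ultimately show ?thesis by blast
    next
      case False
      have "\<not> (\<exists>I\<in>SA mul e cj. cj a + I \<odot> cj b = 0)"
      proof
        assume "\<exists>I\<in>SA mul e cj. cj a + I \<odot> cj b = 0"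
        then obtain I where I: "I \<in> SA mul e cj" and zI: "cj a + I \<odot> cj b = 0" by blast
        show False using K1[OF cb(1) I zI] False by simp
      qed
      hence "Sx mul e cj x \<inter> Vz \<Omega> g = {} \<and> Sx mul e cj x \<inter> Vz \<Omega> gc = {}"
        using Zf Zc False by blast
      thus ?thesis by blast
    qed
  qed
qed

lemma tameN:
  assumes sp: "slice_preserving e D (stem_mul1 mul G1 G2 (cj \<circ> G1) (cj \<circ> G2)) (stem_mul2 mul G1 G2 (cj \<circ> G1) (cj \<circ> G2))"
    and x: "x \<in> Vz \<Omega> Ng"
  shows "Sx mul e cj x \<subseteq> Vz \<Omega> Ng"
proof -
  obtain \<alpha> \<beta> J where z: "Complex \<alpha> \<beta> \<in> D" and J: "J \<in> SA mul e cj" and xx: "x = \<alpha> *\<^sub>R e + \<beta> *\<^sub>R J"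
    and N0: "Ng x = 0" using x unfolding Vz_def Omega_iff by blast
  define P where "P = G1 (Complex \<alpha> \<beta>) \<odot> cj (G1 (Complex \<alpha> \<beta>)) - G2 (Complex \<alpha> \<beta>) \<odot> cj (G2 (Complex \<alpha> \<beta>))"
  define Q where "Q = G1 (Complex \<alpha> \<beta>) \<odot> cj (G2 (Complex \<alpha> \<beta>)) + G2 (Complex \<alpha> \<beta>) \<odot> cj (G1 (Complex \<alpha> \<beta>))"
  have vals: "\<And>I. I \<in> SA mul e cj \<Longrightarrow> Ng (\<alpha> *\<^sub>R e + \<beta> *\<^sub>R I) = P + I \<odot> Q"
    using vN[OF z] by (simp only: P_def Q_def)
  have "P \<in> range (\<lambda>r. r *\<^sub>R e) \<and> Q \<in> range (\<lambda>r. r *\<^sub>R e)"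
    using sp z unfolding slice_preserving_def realA_def stem_mul1_def stem_mul2_def P_def Q_def by auto
  then obtain r s where r: "P = r *\<^sub>R e" and s: "Q = s *\<^sub>R e" by blast
  have "r *\<^sub>R e + s *\<^sub>R J = 0" using vals[OF J] N0 xx r s by simp
  hence "r = 0 \<and> s = 0" by (rule lin_indep[OF J])
  hence PQ: "P = 0" "Q = 0" using r s by auto
  show ?thesis
  proof
    fix y assume "y \<in> Sx mul e cj x"
    then obtain I where I: "I \<in> SA mul e cj" and y: "y = \<alpha> *\<^sub>R e + \<beta> *\<^sub>R I" using Sx_eq[OF J] xx by auto
    show "y \<in> Vz \<Omega> Ng" using vals[OF I] PQ inO[OF z I] y by (simp add: Vz_def)
  qed
qed

lemma sp_vals:
  assumes sp: "slice_preserving e D G1 G2" and x: "x \<in> \<Omega>"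
  shows "g x = gc x \<and> Ng x = Ngc x \<and> (Ng x = 0 \<longleftrightarrow> g x = 0)"
proof -
  obtain \<alpha> \<beta> J where z: "Complex \<alpha> \<beta> \<in> D" and J: "J \<in> SA mul e cj" and xx: "x = \<alpha> *\<^sub>R e + \<beta> *\<^sub>R J"
    using x unfolding Omega_iff by blast
  have "G1 (Complex \<alpha> \<beta>) \<in> range (\<lambda>r. r *\<^sub>R e) \<and> G2 (Complex \<alpha> \<beta>) \<in> range (\<lambda>r. r *\<^sub>R e)"
    using sp z unfolding slice_preserving_def realA_def by auto
  then obtain r s where r: "G1 (Complex \<alpha> \<beta>) = r *\<^sub>R e" and s: "G2 (Complex \<alpha> \<beta>) = s *\<^sub>R e" by blast
  have gx: "g x = r *\<^sub>R e + s *\<^sub>R J" using vg[OF z J] xx r s by simp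
  have gcx: "gc x = r *\<^sub>R e + s *\<^sub>R J" using vgc[OF z J] xx r s by simp
  have Nx: "Ng x = (r * r - s * s) *\<^sub>R e + (2 * r * s) *\<^sub>R J"
    using vN[OF z J] xx r s by (simp add: algebra_simps scaleR_2[symmetric])
  have Ncx: "Ngc x = (r * r - s * s) *\<^sub>R e + (2 * r * s) *\<^sub>R J"
    using vNc[OF z J] xx r s by (simp add: algebra_simps scaleR_2[symmetric])
  have "Ng x = 0 \<longleftrightarrow> r = 0 \<and> s = 0"
  proof
    assume "Ng x = 0"
    hence "(r * r - s * s) *\<^sub>R e + (2 * r * s) *\<^sub>R J = 0" using Nx by simp
    hence "r * r - s * s = 0 \<and> 2 * r * s = 0" by (rule lin_indep[OF J])
    hence rs: "r * r = s * s" "r = 0 \<or> s = 0" by auto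
    thus "r = 0 \<and> s = 0" by auto
  next
    assume "r = 0 \<and> s = 0" thus "Ng x = 0" using Nx by simp
  qed
  moreover have "g x = 0 \<longleftrightarrow> r = 0 \<and> s = 0" using gx lin_indep[OF J] by auto
  ultimately show ?thesis using gx gcx Nx Ncx by simp
qed

end


context stemctx begin

lemma selfO: "x \<in> \<Omega> \<Longrightarrow> x \<in> Sx mul e cj x"
  unfolding Omega_iff using self_Sx by blast

lemma US_to_in: "(\<And>x. x \<in> Vz \<Omega> g \<Longrightarrow> Sx mul e cj x \<subseteq> E) \<Longrightarrow> USx mul e cj (Vz \<Omega> g) \<subseteq> USx_in mul e cj D E"
  unfolding USx_def USx_in_def Vz_def by blast

lemma V_to_in: "(\<And>y. y \<in> E' \<Longrightarrow> y \<in> \<Omega> \<and> Sx mul e cj y \<subseteq> E) \<Longrightarrow> E' \<subseteq> USx_in mul e cj D E"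
  unfolding USx_in_def using selfO by blast

end



theorem corollary4p6:
  fixes mul :: "'a::euclidean_space \<Rightarrow> 'a \<Rightarrow> 'a" and e :: 'a and cj :: "'a \<Rightarrow> 'a"
    and D :: "complex set" and F1 F2 :: "complex \<Rightarrow> 'a"
  assumes alg: "alt_star_alg mul e cj"
    and SA_ne: "SA mul e cj \<noteq> {}"
    and D_ne: "D \<noteq> {}"
    and D_cnj: "\<forall>z\<in>D. cnj z \<in> D"
    and stem: "is_stem D F1 F2"
  shows
  \<comment> \<open>(1)\<close>
  "Vz (OmegaD mul e cj D) (sliceI mul e cj D F1 F2)
     \<subseteq> cj ` Vz (OmegaD mul e cj D) (normal_fun mul e cj D (cj \<circ> F1) (cj \<circ> F2))
   \<and>
  \<comment> \<open>(2)\<close>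
   ((\<forall>x\<in>OmegaD mul e cj D - realA e. fs' mul e cj (sliceI mul e cj D F1 F2) x \<in> CA mul e cj) \<longrightarrow>
      (\<forall>x\<in>OmegaD mul e cj D.
          (Sx mul e cj x \<inter> Vz (OmegaD mul e cj D) (sliceI mul e cj D F1 F2) = {} \<and>
           Sx mul e cj x \<inter> Vz (OmegaD mul e cj D) (slice_conj mul e cj D F1 F2) = {})
        \<or> ((\<exists>a. Sx mul e cj x \<inter> Vz (OmegaD mul e cj D) (sliceI mul e cj D F1 F2) = {a}) \<and>
           (\<exists>b. Sx mul e cj x \<inter> Vz (OmegaD mul e cj D) (slice_conj mul e cj D F1 F2) = {b}))
        \<or> (Sx mul e cj x \<inter> Vz (OmegaD mul e cj D) (sliceI mul e cj D F1 F2) = Sx mul e cj x \<and>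
           Sx mul e cj x \<inter> Vz (OmegaD mul e cj D) (slice_conj mul e cj D F1 F2) = Sx mul e cj x))
    \<and> USx mul e cj (Vz (OmegaD mul e cj D) (sliceI mul e cj D F1 F2))
        \<subseteq> Vz (OmegaD mul e cj D) (normal_fun mul e cj D F1 F2)
    \<and> USx mul e cj (Vz (OmegaD mul e cj D) (sliceI mul e cj D F1 F2))
        = USx mul e cj (Vz (OmegaD mul e cj D) (slice_conj mul e cj D F1 F2))
    \<and> USx mul e cj (Vz (OmegaD mul e cj D) (slice_conj mul e cj D F1 F2))
        \<subseteq> Vz (OmegaD mul e cj D) (normal_fun mul e cj D (cj \<circ> F1) (cj \<circ> F2))
    \<and> (nonsingular mul cj \<longrightarrow>
         USx mul e cj (Vz (OmegaD mul e cj D) (sliceI mul e cj D F1 F2))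
           = USx_in mul e cj D (Vz (OmegaD mul e cj D) (normal_fun mul e cj D F1 F2)
                                \<inter> Vz (OmegaD mul e cj D) (normal_fun mul e cj D (cj \<circ> F1) (cj \<circ> F2)))
       \<and> USx mul e cj (Vz (OmegaD mul e cj D) (slice_conj mul e cj D F1 F2))
           = USx_in mul e cj D (Vz (OmegaD mul e cj D) (normal_fun mul e cj D F1 F2)
                                \<inter> Vz (OmegaD mul e cj D) (normal_fun mul e cj D (cj \<circ> F1) (cj \<circ> F2)))
       \<and> (tame mul e cj D F1 F2 \<longrightarrow>
            USx mul e cj (Vz (OmegaD mul e cj D) (sliceI mul e cj D F1 F2))
              = Vz (OmegaD mul e cj D) (normal_fun mul e cj D F1 F2)
          \<and> USx mul e cj (Vz (OmegaD mul e cj D) (slice_conj mul e cj D F1 F2))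
              = Vz (OmegaD mul e cj D) (normal_fun mul e cj D F1 F2)
          \<and> Vz (OmegaD mul e cj D) (normal_fun mul e cj D F1 F2)
              = Vz (OmegaD mul e cj D) (normal_fun mul e cj D (cj \<circ> F1) (cj \<circ> F2)))))
   \<and>
  \<comment> \<open>(3)\<close>
   ((\<forall>x\<in>OmegaD mul e cj D. fs0 cj (sliceI mul e cj D F1 F2) x \<in> CA mul e cj) \<and>
    (\<forall>x\<in>OmegaD mul e cj D - realA e. fs' mul e cj (sliceI mul e cj D F1 F2) x \<in> CA mul e cj) \<longrightarrow>
      USx_in mul e cj D (Vz (OmegaD mul e cj D) (normal_fun mul e cj D F1 F2))
        = USx mul e cj (Vz (OmegaD mul e cj D) (sliceI mul e cj D F1 F2))
    \<and> USx mul e cj (Vz (OmegaD mul e cj D) (sliceI mul e cj D F1 F2))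
        = USx mul e cj (Vz (OmegaD mul e cj D) (slice_conj mul e cj D F1 F2))
    \<and> USx mul e cj (Vz (OmegaD mul e cj D) (slice_conj mul e cj D F1 F2))
        = USx_in mul e cj D (Vz (OmegaD mul e cj D) (normal_fun mul e cj D (cj \<circ> F1) (cj \<circ> F2)))
    \<and> (tame mul e cj D F1 F2 \<longrightarrow>
         Vz (OmegaD mul e cj D) (normal_fun mul e cj D F1 F2)
           = USx mul e cj (Vz (OmegaD mul e cj D) (sliceI mul e cj D F1 F2))
       \<and> USx mul e cj (Vz (OmegaD mul e cj D) (sliceI mul e cj D F1 F2))
           = USx mul e cj (Vz (OmegaD mul e cj D) (slice_conj mul e cj D F1 F2))
       \<and> USx mul e cj (Vz (OmegaD mul e cj D) (slice_conj mul e cj D F1 F2))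
           = Vz (OmegaD mul e cj D) (normal_fun mul e cj D (cj \<circ> F1) (cj \<circ> F2)))
    \<and> (slice_preserving e D F1 F2 \<longrightarrow>
         Vz (OmegaD mul e cj D) (normal_fun mul e cj D F1 F2)
           = Vz (OmegaD mul e cj D) (sliceI mul e cj D F1 F2)
       \<and> Vz (OmegaD mul e cj D) (sliceI mul e cj D F1 F2)
           = Vz (OmegaD mul e cj D) (slice_conj mul e cj D F1 F2)
       \<and> Vz (OmegaD mul e cj D) (slice_conj mul e cj D F1 F2)
           = Vz (OmegaD mul e cj D) (normal_fun mul e cj D (cj \<circ> F1) (cj \<circ> F2))))"
proof -
  interpret A: altalg mul e cj by (simp add: altalg_def alg)
  interpret S: stemctx mul e cj D F1 F2 by (simp add: stemctx_def stemctx_axioms_def altalg_def alg stem)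
  interpret T: stemctx mul e cj D "cj \<circ> F1" "cj \<circ> F2"
    by (simp add: stemctx_def stemctx_axioms_def altalg_def alg A.stem_cj[OF stem])
  have eq_sc: "slice_conj mul e cj D F1 F2 = sliceI mul e cj D (cj \<circ> F1) (cj \<circ> F2)"
    by (simp add: slice_conj_def)
  have eq_N: "normal_fun mul e cj D F1 F2 = S.Ng" by (simp add: normal_fun_def slice_prod_def)
  have eq_Nc: "normal_fun mul e cj D (cj \<circ> F1) (cj \<circ> F2) = S.Ngc" by (simp add: normal_fun_def slice_prod_def)
  have c1: "cj \<circ> (cj \<circ> F1) = F1" by (rule ext) simp
  have c2: "cj \<circ> (cj \<circ> F2) = F2" by (rule ext) simp
  have eq_cc: "sliceI mul e cj D (cj \<circ> (cj \<circ> F1)) (cj \<circ> (cj \<circ> F2)) = sliceI mul e cj D F1 F2"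
    by (simp only: c1 c2)
  define \<Omega> where "\<Omega> = OmegaD mul e cj D"
  define f where "f = sliceI mul e cj D F1 F2"
  define fc where "fc = sliceI mul e cj D (cj \<circ> F1) (cj \<circ> F2)"
  define Nf where "Nf = S.Ng"
  define Nfc where "Nfc = S.Ngc"
  have TgS: "T.g = fc" by (simp add: fc_def)
  have TgcS: "T.gc = f" using eq_cc by (simp add: f_def)
  have TNg: "T.Ng = Nfc" by (simp add: Nfc_def)
  note defs = \<Omega>_def[symmetric] f_def[symmetric] fc_def[symmetric] Nf_def[symmetric] Nfc_def[symmetric]
  have P1: "Vz \<Omega> f \<subseteq> cj ` Vz \<Omega> Nfc" using S.part1 by (simp only: defs)
  have USeq: "USx mul e cj (Vz \<Omega> f) = USx mul e cj (Vz \<Omega> fc)"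
    if CA2: "\<forall>z\<in>D. F2 z \<in> CA mul e cj"
  proof -
    have CA2T: "\<forall>z\<in>D. (cj \<circ> F2) z \<in> CA mul e cj" using CA2 A.CA_cj by simp
    show ?thesis using S.USconj[OF CA2] T.USconj[OF CA2T] unfolding TgS TgcS by (simp only: defs)
  qed
  have sphN: "Sx mul e cj x \<subseteq> Vz \<Omega> Nf \<and> Sx mul e cj x \<subseteq> Vz \<Omega> Nfc"
    if CA2: "\<forall>z\<in>D. F2 z \<in> CA mul e cj" and x: "x \<in> Vz \<Omega> f" for x
    using S.sphN[OF CA2] x by (simp only: defs)
  have P2: "(\<forall>x\<in>\<Omega> - realA e. fs' mul e cj f x \<in> CA mul e cj) \<longrightarrow>
      (\<forall>x\<in>\<Omega>.
          (Sx mul e cj x \<inter> Vz \<Omega> f = {} \<and> Sx mul e cj x \<inter> Vz \<Omega> fc = {})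
        \<or> ((\<exists>a. Sx mul e cj x \<inter> Vz \<Omega> f = {a}) \<and> (\<exists>b. Sx mul e cj x \<inter> Vz \<Omega> fc = {b}))
        \<or> (Sx mul e cj x \<inter> Vz \<Omega> f = Sx mul e cj x \<and> Sx mul e cj x \<inter> Vz \<Omega> fc = Sx mul e cj x))
    \<and> USx mul e cj (Vz \<Omega> f) \<subseteq> Vz \<Omega> Nf
    \<and> USx mul e cj (Vz \<Omega> f) = USx mul e cj (Vz \<Omega> fc)
    \<and> USx mul e cj (Vz \<Omega> fc) \<subseteq> Vz \<Omega> Nfc
    \<and> (nonsingular mul cj \<longrightarrow>
         USx mul e cj (Vz \<Omega> f) = USx_in mul e cj D (Vz \<Omega> Nf \<inter> Vz \<Omega> Nfc)
       \<and> USx mul e cj (Vz \<Omega> fc) = USx_in mul e cj D (Vz \<Omega> Nf \<inter> Vz \<Omega> Nfc)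
       \<and> (tame mul e cj D F1 F2 \<longrightarrow>
            USx mul e cj (Vz \<Omega> f) = Vz \<Omega> Nf
          \<and> USx mul e cj (Vz \<Omega> fc) = Vz \<Omega> Nf
          \<and> Vz \<Omega> Nf = Vz \<Omega> Nfc))"
  proof (rule impI, intro conjI)
    assume H: "\<forall>x\<in>\<Omega> - realA e. fs' mul e cj f x \<in> CA mul e cj"
    have CA2: "\<forall>z\<in>D. F2 z \<in> CA mul e cj" using S.hypb[OF SA_ne] H by (simp only: defs)
    have CA2T: "\<forall>z\<in>D. (cj \<circ> F2) z \<in> CA mul e cj" using CA2 A.CA_cj by simp
    show "\<forall>x\<in>\<Omega>.
          (Sx mul e cj x \<inter> Vz \<Omega> f = {} \<and> Sx mul e cj x \<inter> Vz \<Omega> fc = {})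
        \<or> ((\<exists>a. Sx mul e cj x \<inter> Vz \<Omega> f = {a}) \<and> (\<exists>b. Sx mul e cj x \<inter> Vz \<Omega> fc = {b}))
        \<or> (Sx mul e cj x \<inter> Vz \<Omega> f = Sx mul e cj x \<and> Sx mul e cj x \<inter> Vz \<Omega> fc = Sx mul e cj x)"
      using S.tri[OF CA2] by (simp only: defs) blast
    show USN: "USx mul e cj (Vz \<Omega> f) \<subseteq> Vz \<Omega> Nf" using S.USN[OF CA2] by (simp only: defs)
    show UE: "USx mul e cj (Vz \<Omega> f) = USx mul e cj (Vz \<Omega> fc)" by (rule USeq[OF CA2])
    show "USx mul e cj (Vz \<Omega> fc) \<subseteq> Vz \<Omega> Nfc" using T.USN[OF CA2T] unfolding TgS TNg by (simp only: defs)
    have NS: "USx mul e cj (Vz \<Omega> f) = USx_in mul e cj D (Vz \<Omega> Nf \<inter> Vz \<Omega> Nfc)"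
      if ns: "nonsingular mul cj"
    proof
      show "USx mul e cj (Vz \<Omega> f) \<subseteq> USx_in mul e cj D (Vz \<Omega> Nf \<inter> Vz \<Omega> Nfc)"
        unfolding \<Omega>_def f_def by (rule S.US_to_in) (use sphN[OF CA2] in \<open>auto simp: defs\<close>)
      show "USx_in mul e cj D (Vz \<Omega> Nf \<inter> Vz \<Omega> Nfc) \<subseteq> USx mul e cj (Vz \<Omega> f)"
        using S.nons[OF ns CA2] by (simp only: defs)
    qed
    have TM: "USx mul e cj (Vz \<Omega> f) = Vz \<Omega> Nf \<and> Vz \<Omega> Nf = Vz \<Omega> Nfc"
      if ns: "nonsingular mul cj" and tm: "tame mul e cj D F1 F2"
    proof -
      have tmu: "slice_preserving e D (stem_mul1 mul F1 F2 (cj \<circ> F1) (cj \<circ> F2)) (stem_mul2 mul F1 F2 (cj \<circ> F1) (cj \<circ> F2))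
         \<and> (\<forall>x\<in>\<Omega>. Nf x = Nfc x)"
        using tm unfolding tame_def eq_N eq_Nc defs .
      have sp: "slice_preserving e D (stem_mul1 mul F1 F2 (cj \<circ> F1) (cj \<circ> F2)) (stem_mul2 mul F1 F2 (cj \<circ> F1) (cj \<circ> F2))"
        and eqN: "\<forall>x\<in>\<Omega>. Nf x = Nfc x" using tmu by blast+
      have VV: "Vz \<Omega> Nf = Vz \<Omega> Nfc" using eqN unfolding Vz_def by auto
      have "Vz \<Omega> Nf \<subseteq> USx_in mul e cj D (Vz \<Omega> Nf \<inter> Vz \<Omega> Nfc)"
      proof (rule S.V_to_in)
        fix y assume y: "y \<in> Vz \<Omega> Nf"
        have "Sx mul e cj y \<subseteq> Vz \<Omega> Nf" using S.tameN[OF sp] y by (simp only: defs)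
        thus "y \<in> S.\<Omega> \<and> Sx mul e cj y \<subseteq> Vz \<Omega> Nf \<inter> Vz \<Omega> Nfc" using y VV by (auto simp: Vz_def \<Omega>_def)
      qed
      hence "Vz \<Omega> Nf \<subseteq> USx mul e cj (Vz \<Omega> f)" using NS[OF ns] by simp
      thus ?thesis using USN VV by blast
    qed
    show "nonsingular mul cj \<longrightarrow>
         USx mul e cj (Vz \<Omega> f) = USx_in mul e cj D (Vz \<Omega> Nf \<inter> Vz \<Omega> Nfc)
       \<and> USx mul e cj (Vz \<Omega> fc) = USx_in mul e cj D (Vz \<Omega> Nf \<inter> Vz \<Omega> Nfc)
       \<and> (tame mul e cj D F1 F2 \<longrightarrow>
            USx mul e cj (Vz \<Omega> f) = Vz \<Omega> Nf
          \<and> USx mul e cj (Vz \<Omega> fc) = Vz \<Omega> Nf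
          \<and> Vz \<Omega> Nf = Vz \<Omega> Nfc)" (is "_ \<longrightarrow> ?C")
    proof (rule impI)
      assume ns: "nonsingular mul cj"
      have a: "USx mul e cj (Vz \<Omega> f) = USx_in mul e cj D (Vz \<Omega> Nf \<inter> Vz \<Omega> Nfc)" by (rule NS[OF ns])
      have b: "USx mul e cj (Vz \<Omega> fc) = USx_in mul e cj D (Vz \<Omega> Nf \<inter> Vz \<Omega> Nfc)" using a UE by simp
      have c: "tame mul e cj D F1 F2 \<longrightarrow> USx mul e cj (Vz \<Omega> f) = Vz \<Omega> Nf
          \<and> USx mul e cj (Vz \<Omega> fc) = Vz \<Omega> Nf \<and> Vz \<Omega> Nf = Vz \<Omega> Nfc"
      proof
        assume tm: "tame mul e cj D F1 F2"
        have t: "USx mul e cj (Vz \<Omega> f) = Vz \<Omega> Nf" "Vz \<Omega> Nf = Vz \<Omega> Nfc" using TM[OF ns tm] by blast+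
        have "USx mul e cj (Vz \<Omega> fc) = Vz \<Omega> Nf" using t(1) UE by simp
        thus "USx mul e cj (Vz \<Omega> f) = Vz \<Omega> Nf
          \<and> USx mul e cj (Vz \<Omega> fc) = Vz \<Omega> Nf \<and> Vz \<Omega> Nf = Vz \<Omega> Nfc" using t by blast
      qed
      show ?C using a b c by blast
    qed
  qed
  have P3: "(\<forall>x\<in>\<Omega>. fs0 cj f x \<in> CA mul e cj) \<and>
    (\<forall>x\<in>\<Omega> - realA e. fs' mul e cj f x \<in> CA mul e cj) \<longrightarrow>
      USx_in mul e cj D (Vz \<Omega> Nf) = USx mul e cj (Vz \<Omega> f)
    \<and> USx mul e cj (Vz \<Omega> f) = USx mul e cj (Vz \<Omega> fc)
    \<and> USx mul e cj (Vz \<Omega> fc) = USx_in mul e cj D (Vz \<Omega> Nfc)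
    \<and> (tame mul e cj D F1 F2 \<longrightarrow>
         Vz \<Omega> Nf = USx mul e cj (Vz \<Omega> f)
       \<and> USx mul e cj (Vz \<Omega> f) = USx mul e cj (Vz \<Omega> fc)
       \<and> USx mul e cj (Vz \<Omega> fc) = Vz \<Omega> Nfc)
    \<and> (slice_preserving e D F1 F2 \<longrightarrow>
         Vz \<Omega> Nf = Vz \<Omega> f
       \<and> Vz \<Omega> f = Vz \<Omega> fc
       \<and> Vz \<Omega> fc = Vz \<Omega> Nfc)"
  proof (rule impI, elim conjE, intro conjI)
    assume H0: "\<forall>x\<in>\<Omega>. fs0 cj f x \<in> CA mul e cj" and H: "\<forall>x\<in>\<Omega> - realA e. fs' mul e cj f x \<in> CA mul e cj"
    have CA2: "\<forall>z\<in>D. F2 z \<in> CA mul e cj" using S.hypb[OF SA_ne] H by (simp only: defs)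
    have CA1: "\<forall>z\<in>D. F1 z \<in> CA mul e cj" using S.hypa[OF SA_ne] H0 by (simp only: defs)
    have CA12: "\<forall>z\<in>D. F1 z \<in> CA mul e cj \<and> F2 z \<in> CA mul e cj" using CA1 CA2 by blast
    have CA12T: "\<forall>z\<in>D. (cj \<circ> F1) z \<in> CA mul e cj \<and> (cj \<circ> F2) z \<in> CA mul e cj" using CA12 A.CA_cj by simp
    have UE: "USx mul e cj (Vz \<Omega> f) = USx mul e cj (Vz \<Omega> fc)" by (rule USeq[OF CA2])
    have E1: "USx_in mul e cj D (Vz \<Omega> Nf) = USx mul e cj (Vz \<Omega> f)"
    proof
      show "USx_in mul e cj D (Vz \<Omega> Nf) \<subseteq> USx mul e cj (Vz \<Omega> f)" using S.ex3[OF CA12] by (simp only: defs)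
      show "USx mul e cj (Vz \<Omega> f) \<subseteq> USx_in mul e cj D (Vz \<Omega> Nf)"
        unfolding \<Omega>_def f_def by (rule S.US_to_in) (use sphN[OF CA2] in \<open>auto simp: defs\<close>)
    qed
    have E3: "USx mul e cj (Vz \<Omega> fc) = USx_in mul e cj D (Vz \<Omega> Nfc)"
    proof
      show "USx_in mul e cj D (Vz \<Omega> Nfc) \<subseteq> USx mul e cj (Vz \<Omega> fc)"
        using T.ex3[OF CA12T] unfolding TgS TNg by (simp only: defs)
      have CA2T: "\<forall>z\<in>D. (cj \<circ> F2) z \<in> CA mul e cj" using CA12T by blast
      show "USx mul e cj (Vz \<Omega> fc) \<subseteq> USx_in mul e cj D (Vz \<Omega> Nfc)"
        using T.US_to_in[of "Vz \<Omega> Nfc"] T.sphN[OF CA2T] unfolding TgS TNg by (simp only: defs)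
    qed
    show "USx_in mul e cj D (Vz \<Omega> Nf) = USx mul e cj (Vz \<Omega> f)" by (rule E1)
    show "USx mul e cj (Vz \<Omega> f) = USx mul e cj (Vz \<Omega> fc)" by (rule UE)
    show "USx mul e cj (Vz \<Omega> fc) = USx_in mul e cj D (Vz \<Omega> Nfc)" by (rule E3)
    have TM: "Vz \<Omega> Nf = USx mul e cj (Vz \<Omega> f) \<and> Vz \<Omega> Nf = Vz \<Omega> Nfc"
      if tm: "tame mul e cj D F1 F2"
    proof -
      have tmu: "slice_preserving e D (stem_mul1 mul F1 F2 (cj \<circ> F1) (cj \<circ> F2)) (stem_mul2 mul F1 F2 (cj \<circ> F1) (cj \<circ> F2))
         \<and> (\<forall>x\<in>\<Omega>. Nf x = Nfc x)"
        using tm unfolding tame_def eq_N eq_Nc defs .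
      have sp: "slice_preserving e D (stem_mul1 mul F1 F2 (cj \<circ> F1) (cj \<circ> F2)) (stem_mul2 mul F1 F2 (cj \<circ> F1) (cj \<circ> F2))"
        and eqN: "\<forall>x\<in>\<Omega>. Nf x = Nfc x" using tmu by blast+
      have VV: "Vz \<Omega> Nf = Vz \<Omega> Nfc" using eqN unfolding Vz_def by auto
      have "Vz \<Omega> Nf \<subseteq> USx_in mul e cj D (Vz \<Omega> Nf)"
      proof (rule S.V_to_in)
        fix y assume y: "y \<in> Vz \<Omega> Nf"
        have "Sx mul e cj y \<subseteq> Vz \<Omega> Nf" using S.tameN[OF sp] y by (simp only: defs)
        thus "y \<in> S.\<Omega> \<and> Sx mul e cj y \<subseteq> Vz \<Omega> Nf" using y by (auto simp: Vz_def \<Omega>_def)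
      qed
      hence "Vz \<Omega> Nf \<subseteq> USx mul e cj (Vz \<Omega> f)" using E1 by simp
      moreover have "USx mul e cj (Vz \<Omega> f) \<subseteq> Vz \<Omega> Nf" using S.USN[OF CA2] by (simp only: defs)
      ultimately show ?thesis using VV by blast
    qed
    show "tame mul e cj D F1 F2 \<longrightarrow>
         Vz \<Omega> Nf = USx mul e cj (Vz \<Omega> f)
       \<and> USx mul e cj (Vz \<Omega> f) = USx mul e cj (Vz \<Omega> fc)
       \<and> USx mul e cj (Vz \<Omega> fc) = Vz \<Omega> Nfc"
    proof
      assume tm: "tame mul e cj D F1 F2"
      have t: "Vz \<Omega> Nf = USx mul e cj (Vz \<Omega> f)" "Vz \<Omega> Nf = Vz \<Omega> Nfc" using TM[OF tm] by blast+
      show "Vz \<Omega> Nf = USx mul e cj (Vz \<Omega> f)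
       \<and> USx mul e cj (Vz \<Omega> f) = USx mul e cj (Vz \<Omega> fc)
       \<and> USx mul e cj (Vz \<Omega> fc) = Vz \<Omega> Nfc" using t UE by simp
    qed
    have SP: "Vz \<Omega> Nf = Vz \<Omega> f \<and> Vz \<Omega> f = Vz \<Omega> fc \<and> Vz \<Omega> fc = Vz \<Omega> Nfc"
      if sp: "slice_preserving e D F1 F2"
    proof -
      have H: "f x = fc x \<and> Nf x = Nfc x \<and> (Nf x = 0 \<longleftrightarrow> f x = 0)" if x: "x \<in> \<Omega>" for x
      proof -
        have "x \<in> OmegaD mul e cj D" using x by (simp add: \<Omega>_def)
        from S.sp_vals[OF sp this] show ?thesis unfolding f_def fc_def Nf_def Nfc_def .
      qed
      have 1: "Vz \<Omega> Nf = Vz \<Omega> f" unfolding Vz_def using H by blast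
      have 2: "Vz \<Omega> f = Vz \<Omega> fc" unfolding Vz_def using H by (metis (no_types, lifting))
      have 3: "Vz \<Omega> fc = Vz \<Omega> Nfc" using 1 2 H unfolding Vz_def by (metis (no_types, lifting))
      show ?thesis using 1 2 3 by blast
    qed
    show "slice_preserving e D F1 F2 \<longrightarrow>
         Vz \<Omega> Nf = Vz \<Omega> f
       \<and> Vz \<Omega> f = Vz \<Omega> fc
       \<and> Vz \<Omega> fc = Vz \<Omega> Nfc" using SP by blast
  qed
  show ?thesis unfolding eq_sc eq_N eq_Nc using P1 P2 P3 by (simp only: defs)
qed



end
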